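(* Let $x_1,\dots,x_n\in K^\vee\setminus K$ and $t>0$, and let $\pi:K^\vee\to K^\vee/K$ be the canonical quotient map. Suppose $\{\pi(x_1),\dots,\pi(x_n)\}$ is an orthogonal set. Then the normed space $E=([1,x_1,\dots,x_n],|\cdot|_t)$ satisfies (SE) if and only if $t\notin V_K$.
   Context: $K$ is a complete non-archimedean non-trivially valued field which is not spherically complete, with valuation group $V_K=\{|x|:x\in K\setminus\{0\}\}$; $K^\vee$ is a fixed spherically complete immediate extension of $K$. $K^\vee/K$ carries the quotient norm $\inf_{a\in K}|z-a|$. $([1,x_1,\dots,x_n],|\cdot|_t)$ is the $K$-linear span of $1,x_1,\dots,x_n$ in $K^\vee$ with norm $|z|_t=t|z|$. A set $S\not\ni0$ is orthogonal if $\|\sum\lambda_is_i\|=\max\|\lambda_is_i\|$ for finitely many distinct $s_i\in S$, $\lambda_i\in K$. A normed space $E$ satisfies (SE) if for each subspace $D\subseteq E$ and each $f\in D'$ with $\|f\|=1$ there is an extension $\tilde f\in E'$ of $f$ with $\|\tilde f\|=1$ (operator norms). *)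

theory Defs
  imports Complex_Main
begin

text \<open>The ambient type 'a plays the role of the spherically complete immediate
extension K^v; the set K of elements of 'a is the base field K.\<close>

definition nonarch_abs :: "('a::field \<Rightarrow> real) \<Rightarrow> bool" where
  "nonarch_abs v \<longleftrightarrow> (\<forall>x. 0 \<le> v x) \<and> (\<forall>x. v x = 0 \<longleftrightarrow> x = 0)
     \<and> (\<forall>x y. v (x * y) = v x * v y) \<and> (\<forall>x y. v (x + y) \<le> max (v x) (v y))"

definition subfield :: "'a::field set \<Rightarrow> bool" where
  "subfield K \<longleftrightarrow> 0 \<in> K \<and> 1 \<in> K \<and> (\<forall>x\<in>K. \<forall>y\<in>K. x + y \<in> K \<and> x * y \<in> K)
     \<and> (\<forall>x\<in>K. - x \<in> K) \<and> (\<forall>x\<in>K. x \<noteq> 0 \<longrightarrow> inverse x \<in> K)"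

definition complete_in :: "'a::field set \<Rightarrow> ('a \<Rightarrow> real) \<Rightarrow> bool" where
  "complete_in K v \<longleftrightarrow> (\<forall>s. (\<forall>n. s n \<in> K) \<and>
       (\<forall>e>0. \<exists>N. \<forall>m\<ge>N. \<forall>k\<ge>N. v (s m - s k) < e)
       \<longrightarrow> (\<exists>l\<in>K. (\<lambda>k. v (s k - l)) \<longlonglongrightarrow> 0))"

definition nontrivially_valued :: "'a::field set \<Rightarrow> ('a \<Rightarrow> real) \<Rightarrow> bool" where
  "nontrivially_valued K v \<longleftrightarrow> (\<exists>a\<in>K. v a \<noteq> 0 \<and> v a \<noteq> 1)"

definition cball_in :: "'a::field set \<Rightarrow> ('a \<Rightarrow> real) \<Rightarrow> 'a \<Rightarrow> real \<Rightarrow> 'a set" where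
  "cball_in K v a r = {y \<in> K. v (y - a) \<le> r}"

definition sph_complete_in :: "'a::field set \<Rightarrow> ('a \<Rightarrow> real) \<Rightarrow> bool" where
  "sph_complete_in K v \<longleftrightarrow> (\<forall>a r. (\<forall>n. a n \<in> K \<and> r n > 0) \<and>
       (\<forall>n. cball_in K v (a (Suc n)) (r (Suc n)) \<subseteq> cball_in K v (a n) (r n))
       \<longrightarrow> (\<Inter>n. cball_in K v (a n) (r n)) \<noteq> {})"

definition value_group :: "'a::field set \<Rightarrow> ('a \<Rightarrow> real) \<Rightarrow> real set" where
  "value_group K v = {v a | a. a \<in> K \<and> a \<noteq> 0}"

text \<open>Immediate extension: same value group and same residue field.\<close>
definition immediate_ext :: "'a::field set \<Rightarrow> ('a \<Rightarrow> real) \<Rightarrow> bool" where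
  "immediate_ext K v \<longleftrightarrow> value_group UNIV v = value_group K v \<and>
       (\<forall>z. v z \<le> 1 \<longrightarrow> (\<exists>a\<in>K. v a \<le> 1 \<and> v (z - a) < 1))"

text \<open>Quotient norm on K^v/K, evaluated at a representative.\<close>
definition quot_norm :: "'a::field set \<Rightarrow> ('a \<Rightarrow> real) \<Rightarrow> 'a \<Rightarrow> real" where
  "quot_norm K v z = Inf {v (z - a) | a. a \<in> K}"

text \<open>The set {pi(x_1),...,pi(x_n)} is orthogonal in K^v/K: it does not contain 0, and for
  finitely many distinct elements pi(x_i) (i in I) and scalars lam_i in K,
  the quotient norm of the sum is the maximum of the quotient norms of the terms.\<close>
definition pi_orthogonal :: "'a::field set \<Rightarrow> ('a \<Rightarrow> real) \<Rightarrow> nat \<Rightarrow> (nat \<Rightarrow> 'a) \<Rightarrow> bool" where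
  "pi_orthogonal K v n x \<longleftrightarrow> (\<forall>i\<in>{1..n}. x i \<notin> K) \<and>
     (\<forall>I lam. I \<subseteq> {1..n} \<and> I \<noteq> {} \<and> (\<forall>i\<in>I. \<forall>j\<in>I. i \<noteq> j \<longrightarrow> x i - x j \<notin> K)
        \<and> (\<forall>i\<in>I. lam i \<in> K) \<longrightarrow>
        quot_norm K v (\<Sum>i\<in>I. lam i * x i) = Max ((\<lambda>i. quot_norm K v (lam i * x i)) ` I))"

definition kspan :: "'a::field set \<Rightarrow> nat \<Rightarrow> (nat \<Rightarrow> 'a) \<Rightarrow> 'a set" where
  "kspan K n x = {c 0 + (\<Sum>i=1..n. c i * x i) | c. \<forall>i\<in>{0..n}. c i \<in> K}"

definition ksubspace :: "'a::field set \<Rightarrow> 'a set \<Rightarrow> bool" where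
  "ksubspace K D \<longleftrightarrow> 0 \<in> D \<and> (\<forall>a\<in>D. \<forall>b\<in>D. a + b \<in> D) \<and> (\<forall>c\<in>K. \<forall>a\<in>D. c * a \<in> D)"

definition klinear_fun :: "'a::field set \<Rightarrow> 'a set \<Rightarrow> ('a \<Rightarrow> 'a) \<Rightarrow> bool" where
  "klinear_fun K D f \<longleftrightarrow> (\<forall>d\<in>D. f d \<in> K) \<and> (\<forall>a\<in>D. \<forall>b\<in>D. f (a + b) = f a + f b)
     \<and> (\<forall>c\<in>K. \<forall>a\<in>D. f (c * a) = c * f a)"

definition has_opnorm :: "('a \<Rightarrow> real) \<Rightarrow> ('a \<Rightarrow> real) \<Rightarrow> 'a set \<Rightarrow> ('a \<Rightarrow> 'a) \<Rightarrow> real \<Rightarrow> bool" where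
  "has_opnorm v N D f c \<longleftrightarrow> (\<forall>d\<in>D. v (f d) \<le> c * N d) \<and>
     (\<forall>c'. (\<forall>d\<in>D. v (f d) \<le> c' * N d) \<longrightarrow> c \<le> c')"

definition has_SE :: "'a::field set \<Rightarrow> ('a \<Rightarrow> real) \<Rightarrow> ('a \<Rightarrow> real) \<Rightarrow> 'a set \<Rightarrow> bool" where
  "has_SE K v N E \<longleftrightarrow> (\<forall>D f. ksubspace K D \<and> D \<subseteq> E \<and> klinear_fun K D f \<and> has_opnorm v N D f 1
     \<longrightarrow> (\<exists>g. klinear_fun K E g \<and> (\<forall>d\<in>D. g d = f d) \<and> has_opnorm v N E g 1))"

end

theory Submission
  imports Defs
begin

locale valsetup =
  fixes v :: "'a::field \<Rightarrow> real" and K :: "'a set"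
  assumes nonarch: "nonarch_abs v" and sub: "subfield K"
begin

lemma v_nonneg[simp]: "0 \<le> v a" using nonarch unfolding nonarch_abs_def by auto
lemma v_zero_iff[simp]: "v a = 0 \<longleftrightarrow> a = 0" using nonarch unfolding nonarch_abs_def by auto
lemma v0[simp]: "v 0 = 0" using v_zero_iff by blast
lemma v_mult: "v (a * b) = v a * v b" using nonarch unfolding nonarch_abs_def by auto
lemma v_ultra: "v (a + b) \<le> max (v a) (v b)" using nonarch unfolding nonarch_abs_def by auto
lemma v_pos: "a \<noteq> 0 \<Longrightarrow> 0 < v a" using v_nonneg[of a] v_zero_iff[of a] by linarith
lemma v_one[simp]: "v 1 = 1"
proof -
  have "v 1 = v 1 * v 1" using v_mult[of 1 1] by simp
  moreover have "v 1 \<noteq> 0" by simp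
  ultimately show ?thesis by (metis mult_cancel_right1)
qed
lemma v_minus[simp]: "v (- a) = v a"
proof -
  have "v (-1) * v (-1) = 1" using v_mult[of "-1" "-1"] by simp
  hence "(v (-1) - 1) * (v (-1) + 1) = 0" by (simp add: algebra_simps)
  moreover have "v (-1) + 1 > 0" using v_nonneg[of "-1"] by linarith
  ultimately have "v (-1) = 1" by simp
  thus ?thesis using v_mult[of "-1" a] by simp
qed
lemma v_sym: "v (a - b) = v (b - a)" by (metis minus_diff_eq v_minus)
lemma v_ultra_diff: "v (a - b) \<le> max (v a) (v b)" using v_ultra[of a "-b"] by simp
lemma v_strict: "v b < v a \<Longrightarrow> v (a + b) = v a"
proof -
  assume h: "v b < v a"
  have "v (a + b) \<le> v a" using v_ultra[of a b] h by simp
  moreover have "v a \<le> max (v (a + b)) (v b)" using v_ultra[of "a + b" "-b"] by simp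
  ultimately show ?thesis using h by linarith
qed
lemma v_strict_diff: "v b < v a \<Longrightarrow> v (a - b) = v a" using v_strict[of "-b" a] by simp
lemma v_inverse: "v (inverse a) = inverse (v a)"
proof (cases "a = 0")
  case True then show ?thesis by simp
next
  case False
  have "a * inverse a = 1" using False by (rule right_inverse)
  hence "v a * v (inverse a) = 1" using v_mult v_one by metis
  thus ?thesis by (rule inverse_unique[symmetric])
qed
lemma v_divide: "v (a / b) = v a / v b" by (simp add: divide_inverse v_mult v_inverse)

lemma K0[simp]: "0 \<in> K" and K1[simp]: "1 \<in> K" using sub unfolding subfield_def by auto
lemma Kadd: "a \<in> K \<Longrightarrow> b \<in> K \<Longrightarrow> a + b \<in> K" using sub unfolding subfield_def by auto
lemma Kmult: "a \<in> K \<Longrightarrow> b \<in> K \<Longrightarrow> a * b \<in> K" using sub unfolding subfield_def by auto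
lemma Kuminus: "a \<in> K \<Longrightarrow> - a \<in> K" using sub unfolding subfield_def by auto
lemma Kdiff: "a \<in> K \<Longrightarrow> b \<in> K \<Longrightarrow> a - b \<in> K" using Kadd Kuminus by (metis diff_conv_add_uminus)
lemma Kinverse: "a \<in> K \<Longrightarrow> inverse a \<in> K" using sub unfolding subfield_def by (cases "a = 0") auto
lemma Kdivide: "a \<in> K \<Longrightarrow> b \<in> K \<Longrightarrow> a / b \<in> K" by (simp add: divide_inverse Kmult Kinverse)
lemma Ksum: "finite S \<Longrightarrow> (\<And>i. i \<in> S \<Longrightarrow> f i \<in> K) \<Longrightarrow> sum f S \<in> K"
  by (induction S rule: finite_induct) (auto intro: Kadd)

abbreviation q where "q \<equiv> quot_norm K v"

lemma q_set_ne: "{v (e - a) | a. a \<in> K} \<noteq> {}" using K0 by blast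
lemma q_bdd: "bdd_below {v (e - a) | a. a \<in> K}" unfolding bdd_below_def by (rule exI[of _ 0]) auto
lemma q_le: "a \<in> K \<Longrightarrow> q e \<le> v (e - a)"
  unfolding quot_norm_def by (rule cInf_lower) (use q_bdd in auto)
lemma q_nonneg: "0 \<le> q e"
  unfolding quot_norm_def by (rule cInf_greatest) (use q_set_ne in auto)
lemma q_approx: "q e < r \<Longrightarrow> \<exists>a\<in>K. v (e - a) < r"
proof -
  assume "q e < r"
  then have "Inf {v (e - a) | a. a \<in> K} < r" unfolding quot_norm_def .
  then obtain y where "y \<in> {v (e - a) | a. a \<in> K}" "y < r"
    using cInf_less_iff[OF q_set_ne q_bdd] by blast
  thus ?thesis by auto
qed
lemma q_eqI:
  assumes "\<And>a. a \<in> K \<Longrightarrow> m \<le> v (e - a)" and "\<And>r. m < r \<Longrightarrow> \<exists>a\<in>K. v (e - a) < r"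
  shows "q e = m"
proof -
  have "m \<le> q e" unfolding quot_norm_def by (rule cInf_greatest) (use q_set_ne assms(1) in auto)
  moreover have "q e \<le> m"
  proof (rule ccontr)
    assume "\<not> q e \<le> m"
    then obtain a where "a \<in> K" "v (e - a) < q e" using assms(2)[of "q e"] by auto
    thus False using q_le[of a e] by simp
  qed
  ultimately show ?thesis by simp
qed
lemma q_K: "e \<in> K \<Longrightarrow> q e = 0"
  using q_le[of e e] q_nonneg[of e] by simp
lemma q_shift: "k \<in> K \<Longrightarrow> q (e + k) = q e"
proof (rule q_eqI)
  fix a assume "k \<in> K" "a \<in> K"
  then show "q e \<le> v (e + k - a)" using q_le[of "a - k" e] Kdiff by (simp add: algebra_simps)
next
  fix r assume k: "k \<in> K" and "q e < r"
  then obtain a where "a \<in> K" "v (e - a) < r" using q_approx by blast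
  then show "\<exists>a\<in>K. v (e + k - a) < r" using k by (intro bexI[of _ "a + k"]) (auto simp: Kadd algebra_simps)
qed
lemma q_scale: "c \<in> K \<Longrightarrow> q (c * e) = v c * q e"
proof (cases "c = 0")
  case True then show ?thesis by (simp add: q_K)
next
  case False
  assume c: "c \<in> K"
  have vc: "0 < v c" using False v_pos by simp
  show ?thesis
  proof (rule q_eqI)
    fix a assume a: "a \<in> K"
    have "q e \<le> v (e - a / c)" using q_le Kdivide[OF a c] by simp
    hence "v c * q e \<le> v c * v (e - a / c)" using vc by simp
    also have "v c * v (e - a / c) = v (c * e - a)"
      by (simp add: v_mult[symmetric] right_diff_distrib False)
    finally show "v c * q e \<le> v (c * e - a)" .
  next
    fix r assume "v c * q e < r"
    hence "q e < r / v c" using vc by (simp add: field_simps)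
    then obtain a where a: "a \<in> K" "v (e - a) < r / v c" using q_approx by blast
    have "v (c * e - c * a) = v c * v (e - a)" by (simp add: v_mult[symmetric] right_diff_distrib)
    also have "\<dots> < r" using a(2) vc by (simp add: field_simps)
    finally show "\<exists>a\<in>K. v (c * e - a) < r" using Kmult[OF c a(1)] by blast
  qed
qed
lemma q_uminus: "q (- e) = q e" using q_scale[of "-1" e] Kuminus[OF K1] by simp

end

locale setting = valsetup v K
  for v :: "'a::field \<Rightarrow> real" and K :: "'a set" +
  fixes x :: "nat \<Rightarrow> 'a" and n :: nat and t :: real
  assumes compl: "complete_in K v" and imm: "immediate_ext K v"
    and n1: "n \<ge> 1" and xK: "\<forall>i\<in>{1..n}. x i \<notin> K" and tpos: "t > 0"
    and orth: "pi_orthogonal K v n x"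
begin

lemma vg: "e \<noteq> 0 \<Longrightarrow> \<exists>a\<in>K. a \<noteq> 0 \<and> v a = v e"
proof -
  assume "e \<noteq> 0"
  hence "v e \<in> value_group UNIV v" unfolding value_group_def by blast
  hence "v e \<in> value_group K v" using imm unfolding immediate_ext_def by simp
  thus ?thesis unfolding value_group_def by auto
qed

lemma close_approx: "e \<noteq> 0 \<Longrightarrow> \<exists>b\<in>K. v (e - b) < v e"
proof -
  assume e: "e \<noteq> 0"
  obtain a where a: "a \<in> K" "a \<noteq> 0" "v a = v e" using vg[OF e] by blast
  have "v (e / a) = 1" using a e by (simp add: v_divide)
  then obtain c where c: "c \<in> K" "v (e / a - c) < 1" using imm unfolding immediate_ext_def by force
  have "a * (e / a - c) = e - a * c" using a(2) by (simp add: right_diff_distrib)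
  hence "v (e - a * c) = v (a * (e / a - c))" by simp
  also have "\<dots> = v a * v (e / a - c)" by (rule v_mult)
  also have "\<dots> < v a" using c(2) v_pos[OF a(2)] by simp
  finally show ?thesis using a Kmult[OF a(1) c(1)] by auto
qed

lemma q_lt: "e \<noteq> 0 \<Longrightarrow> q e < v e"
  using close_approx q_le by (meson le_less_trans)

lemma q_pos: assumes "e \<notin> K" shows "0 < q e"
proof (rule ccontr)
  assume "\<not> 0 < q e"
  hence q0: "q e = 0" using q_nonneg[of e] by simp
  have "\<forall>k::nat. \<exists>a\<in>K. v (e - a) < inverse (real (Suc k))"
    using q_approx q0 by simp
  then obtain s where s: "\<And>k. s k \<in> K" "\<And>k. v (e - s k) < inverse (real (Suc k))"
    by metis
  have cauchy: "\<forall>\<epsilon>>0. \<exists>N. \<forall>m\<ge>N. \<forall>k\<ge>N. v (s m - s k) < \<epsilon>"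
  proof (intro allI impI)
    fix \<epsilon> :: real assume "\<epsilon> > 0"
    then obtain N where N: "inverse (real (Suc N)) < \<epsilon>" using reals_Archimedean by blast
    have "\<forall>m\<ge>N. \<forall>k\<ge>N. v (s m - s k) < \<epsilon>"
    proof (intro allI impI)
      fix m k assume mk: "m \<ge> N" "k \<ge> N"
      have im: "inverse (real (Suc m)) \<le> inverse (real (Suc N))" using mk by (simp add: field_simps)
      have ik: "inverse (real (Suc k)) \<le> inverse (real (Suc N))" using mk by (simp add: field_simps)
      have "s m - s k = (e - s k) - (e - s m)" by simp
      hence "v (s m - s k) \<le> max (v (e - s k)) (v (e - s m))" using v_ultra_diff by metis
      thus "v (s m - s k) < \<epsilon>" using s(2)[of m] s(2)[of k] im ik N by linarith
    qed
    thus "\<exists>N. \<forall>m\<ge>N. \<forall>k\<ge>N. v (s m - s k) < \<epsilon>" by blast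
  qed
  obtain l where l: "l \<in> K" "(\<lambda>k. v (s k - l)) \<longlonglongrightarrow> 0"
    using compl cauchy s(1) unfolding complete_in_def by blast
  have t1: "(\<lambda>k. inverse (real (Suc k))) \<longlonglongrightarrow> 0"
    using LIMSEQ_inverse_real_of_nat by simp
  have t2: "(\<lambda>k. inverse (real (Suc k)) + v (s k - l)) \<longlonglongrightarrow> 0"
    using tendsto_add[OF t1 l(2)] by simp
  have "v (e - l) \<le> 0"
  proof (rule LIMSEQ_le_const[OF t2], intro exI allI impI)
    fix k :: nat
    have "e - l = (e - s k) + (s k - l)" by simp
    hence "v (e - l) \<le> max (v (e - s k)) (v (s k - l))" using v_ultra by metis
    thus "v (e - l) \<le> inverse (real (Suc k)) + v (s k - l)"
      using s(2)[of k] v_nonneg[of "s k - l"] v_nonneg[of "e - s k"] by linarith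
  qed
  hence "e = l" using v_nonneg[of "e - l"] by simp
  thus False using assms l(1) by simp
qed

lemma q_zero_iff: "q e = 0 \<longleftrightarrow> e \<in> K" using q_pos q_K by fastforce

lemma tV: assumes "t \<notin> value_group K v" "c \<in> K" "u \<noteq> 0" "v c \<le> t * v u"
  shows "v c < t * v u"
proof (cases "c = 0")
  case True then show ?thesis using tpos v_pos[OF assms(3)] by simp
next
  case False
  obtain a where a: "a \<in> K" "a \<noteq> 0" "v a = v u" using vg[OF assms(3)] by blast
  have ne: "v (c / a) \<noteq> t"
  proof
    assume "v (c / a) = t"
    moreover have "c / a \<in> K" "c / a \<noteq> 0" using Kdivide[OF assms(2) a(1)] False a(2) by auto
    ultimately show False using assms(1) unfolding value_group_def by blast
  qed
  have "v c \<noteq> t * v u"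
  proof
    assume "v c = t * v u"
    hence "v (c / a) = t" using a v_pos[OF a(2)] assms(3) by (simp add: v_divide)
    thus False using ne by simp
  qed
  thus ?thesis using assms(4) by simp
qed

end

context setting begin

definition J where "J = {i\<in>{1..n}. \<forall>i'\<in>{1..n}. i' < i \<longrightarrow> x i - x i' \<notin> K}"
definition \<delta> where "\<delta> j = q (x j)"
abbreviation E where "E \<equiv> kspan K n x"

lemma J_sub: "J \<subseteq> {1..n}" unfolding J_def by auto
lemma finJ: "finite J" using J_sub finite_subset by blast
lemma J_xK: "j \<in> J \<Longrightarrow> x j \<notin> K" using J_sub xK by auto
lemma J_prop: "i \<in> J \<Longrightarrow> i' \<in> {1..n} \<Longrightarrow> i' < i \<Longrightarrow> x i - x i' \<notin> K"
  unfolding J_def by blast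
lemma J_dist: assumes "i \<in> J" "j \<in> J" "i \<noteq> j" shows "x i - x j \<notin> K"
proof (cases "j < i")
  case True
  have "j \<in> {1..n}" using assms(2) J_sub by blast
  then show ?thesis using J_prop[OF assms(1) _ True] by blast
next
  case False
  hence "i < j" using assms(3) by simp
  moreover have "i \<in> {1..n}" using assms(1) J_sub by blast
  ultimately have "x j - x i \<notin> K" using J_prop[OF assms(2)] by blast
  moreover have "x i - x j = - (x j - x i)" by simp
  ultimately show ?thesis using Kuminus by fastforce
qed
lemma J_rep: assumes "i \<in> {1..n}" shows "\<exists>j\<in>J. x i - x j \<in> K"
proof -
  define P where "P = (\<lambda>i'. i' \<in> {1..n} \<and> x i - x i' \<in> K)"
  have Pi: "P i" using assms unfolding P_def by simp
  define r where "r = (LEAST i'. P i')"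
  have Pr: "P r" unfolding r_def using Pi by (rule LeastI)
  have "r \<in> J"
  proof -
    have "\<forall>i'\<in>{1..n}. i' < r \<longrightarrow> x r - x i' \<notin> K"
    proof (intro ballI impI)
      fix i' assume i': "i' \<in> {1..n}" "i' < r"
      show "x r - x i' \<notin> K"
      proof
        assume "x r - x i' \<in> K"
        hence "x i - x i' \<in> K" using Pr Kadd unfolding P_def by (metis diff_add_cancel add_diff_eq)
        hence "P i'" using i' unfolding P_def by simp
        hence "r \<le> i'" unfolding r_def by (rule Least_le)
        thus False using i' by simp
      qed
    qed
    thus ?thesis using Pr unfolding J_def P_def by simp
  qed
  thus ?thesis using Pr unfolding P_def by blast
qed
lemma J_ne: "J \<noteq> {}" using J_rep[of 1] n1 by auto

lemma \<delta>_pos: "j \<in> J \<Longrightarrow> 0 < \<delta> j" unfolding \<delta>_def using q_pos J_xK by simp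

lemma orth_J: assumes "\<forall>j\<in>J. d j \<in> K"
  shows "q (\<Sum>j\<in>J. d j * x j) = Max ((\<lambda>j. v (d j) * \<delta> j) ` J)"
proof -
  have "q (\<Sum>j\<in>J. d j * x j) = Max ((\<lambda>i. q (d i * x i)) ` J)"
  proof -
    have all: "\<forall>I lam. I \<subseteq> {1..n} \<and> I \<noteq> {} \<and> (\<forall>i\<in>I. \<forall>j\<in>I. i \<noteq> j \<longrightarrow> x i - x j \<notin> K)
        \<and> (\<forall>i\<in>I. lam i \<in> K) \<longrightarrow>
        q (\<Sum>i\<in>I. lam i * x i) = Max ((\<lambda>i. q (lam i * x i)) ` I)"
      using orth unfolding pi_orthogonal_def by (rule conjunct2)
    have pre: "J \<subseteq> {1..n} \<and> J \<noteq> {} \<and> (\<forall>i\<in>J. \<forall>j\<in>J. i \<noteq> j \<longrightarrow> x i - x j \<notin> K) \<and> (\<forall>i\<in>J. d i \<in> K)"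
      using J_sub J_ne J_dist assms by blast
    show ?thesis using mp[OF spec[OF spec[OF all, of J], of d] pre] .
  qed
  also have "(\<lambda>i. q (d i * x i)) ` J = (\<lambda>j. v (d j) * \<delta> j) ` J"
    using assms q_scale unfolding \<delta>_def by (intro image_cong) auto
  finally show ?thesis .
qed

lemma E_char: "e \<in> E \<longleftrightarrow> (\<exists>c0 c. c0 \<in> K \<and> (\<forall>j\<in>J. c j \<in> K) \<and> e = c0 + (\<Sum>j\<in>J. c j * x j))"
proof
  assume "e \<in> E"
  then obtain c where c: "\<forall>i\<in>{0..n}. c i \<in> K" "e = c 0 + (\<Sum>i=1..n. c i * x i)"
    unfolding kspan_def by blast
  have "\<forall>i. \<exists>j. i \<in> {1..n} \<longrightarrow> j \<in> J \<and> x i - x j \<in> K" using J_rep by blast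
  then obtain r where r: "\<And>i. i \<in> {1..n} \<Longrightarrow> r i \<in> J \<and> x i - x (r i) \<in> K" by metis
  define k where "k i = x i - x (r i)" for i
  have s1: "(\<Sum>i=1..n. c i * x i) = (\<Sum>i=1..n. c i * x (r i) + c i * k i)"
    unfolding k_def by (rule sum.cong) (simp_all add: algebra_simps)
  have s2: "(\<Sum>i=1..n. c i * x (r i) + c i * k i) = (\<Sum>i=1..n. c i * x (r i)) + (\<Sum>i=1..n. c i * k i)"
    by (rule sum.distrib)
  have rsub: "r ` {1..n} \<subseteq> J" using r by blast
  have s3: "(\<Sum>i=1..n. c i * x (r i)) = (\<Sum>j\<in>J. sum (\<lambda>i. c i * x (r i)) {i\<in>{1..n}. r i = j})"
    using sum.group[of "{1..n}" J r "\<lambda>i. c i * x (r i)", OF _ finJ rsub] by simp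
  have s4: "sum (\<lambda>i. c i * x (r i)) {i\<in>{1..n}. r i = j} = (\<Sum>i\<in>{i\<in>{1..n}. r i = j}. c i) * x j" for j
  proof -
    have "sum (\<lambda>i. c i * x (r i)) {i\<in>{1..n}. r i = j} = sum (\<lambda>i. c i * x j) {i\<in>{1..n}. r i = j}"
      by (rule sum.cong) simp_all
    also have "\<dots> = (\<Sum>i\<in>{i\<in>{1..n}. r i = j}. c i) * x j" by (rule sum_distrib_right[symmetric])
    finally show ?thesis .
  qed
  have eq: "e = (c 0 + (\<Sum>i=1..n. c i * k i)) + (\<Sum>j\<in>J. (\<Sum>i\<in>{i\<in>{1..n}. r i = j}. c i) * x j)"
    using c(2) s1 s2 s3 s4 by (simp add: add.assoc add.commute add.left_commute)
  have "(\<Sum>i=1..n. c i * k i) \<in> K"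
  proof (rule Ksum)
    fix i assume "i \<in> {1..n}"
    then show "c i * k i \<in> K" using c(1) r unfolding k_def by (intro Kmult) auto
  qed simp
  define c0' where "c0' = c 0 + (\<Sum>i=1..n. c i * k i)"
  define cc where "cc j = (\<Sum>i\<in>{i\<in>{1..n}. r i = j}. c i)" for j
  have k0: "c0' \<in> K" unfolding c0'_def using c(1) Kadd \<open>(\<Sum>i=1..n. c i * k i) \<in> K\<close> by simp
  have kc: "\<forall>j\<in>J. cc j \<in> K"
  proof
    fix j assume "j \<in> J"
    show "cc j \<in> K" unfolding cc_def by (rule Ksum) (use c(1) in auto)
  qed
  have eq': "e = c0' + (\<Sum>j\<in>J. cc j * x j)" using eq unfolding c0'_def cc_def .
  show "\<exists>c0 c. c0 \<in> K \<and> (\<forall>j\<in>J. c j \<in> K) \<and> e = c0 + (\<Sum>j\<in>J. c j * x j)"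
    using k0 kc eq' by blast
next
  assume "\<exists>c0 c. c0 \<in> K \<and> (\<forall>j\<in>J. c j \<in> K) \<and> e = c0 + (\<Sum>j\<in>J. c j * x j)"
  then obtain c0 c where c: "c0 \<in> K" "\<forall>j\<in>J. c j \<in> K" "e = c0 + (\<Sum>j\<in>J. c j * x j)" by blast
  define c' where "c' i = (if i = 0 then c0 else if i \<in> J then c i else 0)" for i
  have "(\<Sum>i=1..n. c' i * x i) = (\<Sum>i\<in>{1..n}. if i \<in> J then c i * x i else 0)"
    unfolding c'_def by (rule sum.cong) simp_all
  also have "\<dots> = (\<Sum>i\<in>{1..n} \<inter> J. c i * x i)" by (rule sum.inter_restrict[symmetric]) simp
  also have "{1..n} \<inter> J = J" using J_sub by blast
  finally have "(\<Sum>i=1..n. c' i * x i) = (\<Sum>j\<in>J. c j * x j)" .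
  moreover have "c' 0 = c0" unfolding c'_def by simp
  ultimately have e1: "e = c' 0 + (\<Sum>i=1..n. c' i * x i)" using c(3) by simp
  have e2: "\<forall>i\<in>{0..n}. c' i \<in> K" using c unfolding c'_def by auto
  show "e \<in> E" unfolding kspan_def
    by (rule CollectI, rule exI[of _ c'], rule conjI[OF e1 e2])
qed

lemma E_intro: assumes "c0 \<in> K" "\<forall>j\<in>J. c j \<in> K" "e = c0 + (\<Sum>j\<in>J. c j * x j)"
  shows "e \<in> E"
proof -
  have "\<exists>c0 c. c0 \<in> K \<and> (\<forall>j\<in>J. c j \<in> K) \<and> e = c0 + (\<Sum>j\<in>J. c j * x j)"
    by (rule exI[of _ c0], rule exI[of _ c]) (use assms in blast)
  thus ?thesis by (rule E_char[THEN iffD2])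
qed

lemma rep_unique:
  assumes "c0 \<in> K" "\<forall>j\<in>J. c j \<in> K" "c0' \<in> K" "\<forall>j\<in>J. c' j \<in> K"
    and eq: "c0 + (\<Sum>j\<in>J. c j * x j) = c0' + (\<Sum>j\<in>J. c' j * x j)"
  shows "c0 = c0' \<and> (\<forall>j\<in>J. c j = c' j)"
proof -
  define A where "A = (\<Sum>j\<in>J. c j * x j)"
  define B where "B = (\<Sum>j\<in>J. c' j * x j)"
  have s1: "(\<Sum>j\<in>J. (c j - c' j) * x j) = A - B"
    unfolding A_def B_def by (simp only: left_diff_distrib sum_subtractf)
  have eq2: "c0 + A = c0' + B" using eq unfolding A_def B_def .
  have "A - B = c0' - c0"
  proof -
    have "A - B = (c0 + A) - (c0 + B)" by simp
    also have "\<dots> = (c0' + B) - (c0 + B)" by (simp only: eq2)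
    also have "\<dots> = c0' - c0" by simp
    finally show ?thesis .
  qed
  hence s: "(\<Sum>j\<in>J. (c j - c' j) * x j) = c0' - c0" using s1 by simp
  have d: "\<forall>j\<in>J. c j - c' j \<in> K" using assms Kdiff by blast
  have "q (\<Sum>j\<in>J. (c j - c' j) * x j) = 0"
    unfolding s by (rule q_K) (rule Kdiff[OF assms(3) assms(1)])
  hence mx: "Max ((\<lambda>j. v (c j - c' j) * \<delta> j) ` J) = 0"
    using orth_J[OF d] by simp
  have le: "\<forall>j\<in>J. v (c j - c' j) * \<delta> j \<le> 0"
  proof
    fix j assume "j \<in> J"
    hence "v (c j - c' j) * \<delta> j \<le> Max ((\<lambda>j. v (c j - c' j) * \<delta> j) ` J)"
      using finJ by (intro Max_ge) auto
    thus "v (c j - c' j) * \<delta> j \<le> 0" using mx by simp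
  qed
  have cj: "\<forall>j\<in>J. c j = c' j"
  proof
    fix j assume j: "j \<in> J"
    have "v (c j - c' j) * \<delta> j \<le> 0" using le j by blast
    hence "v (c j - c' j) \<le> 0" using \<delta>_pos[OF j] by (simp add: mult_le_0_iff)
    thus "c j = c' j" using v_nonneg[of "c j - c' j"] by simp
  qed
  hence AB: "A = B" unfolding A_def B_def by (intro sum.cong) simp_all
  have "c0 + B = c0' + B" using eq2 unfolding AB .
  hence "c0 = c0'" by (rule add_right_imp_eq)
  thus ?thesis using cj by blast
qed

definition coord where "coord e = (SOME p. fst p \<in> K \<and> (\<forall>j\<in>J. snd p j \<in> K) \<and> e = fst p + (\<Sum>j\<in>J. snd p j * x j))"
definition lam0 where "lam0 e = fst (coord e)"
definition lam where "lam j e = snd (coord e) j"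

lemma coord_spec: assumes "e \<in> E"
  shows "lam0 e \<in> K \<and> (\<forall>j\<in>J. lam j e \<in> K) \<and> e = lam0 e + (\<Sum>j\<in>J. lam j e * x j)"
proof -
  obtain c0 c where "c0 \<in> K \<and> (\<forall>j\<in>J. c j \<in> K) \<and> e = c0 + (\<Sum>j\<in>J. c j * x j)"
    using E_char[THEN iffD1, OF assms] by blast
  hence "\<exists>p. fst p \<in> K \<and> (\<forall>j\<in>J. snd p j \<in> K) \<and> e = fst p + (\<Sum>j\<in>J. snd p j * x j)"
    by (intro exI[of _ "(c0, c)"]) simp
  hence "fst (coord e) \<in> K \<and> (\<forall>j\<in>J. snd (coord e) j \<in> K) \<and> e = fst (coord e) + (\<Sum>j\<in>J. snd (coord e) j * x j)"
    unfolding coord_def by (rule someI_ex)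
  thus ?thesis unfolding lam0_def lam_def by blast
qed

lemma lam0_K: "e \<in> E \<Longrightarrow> lam0 e \<in> K" using coord_spec by blast
lemma lam_K: "e \<in> E \<Longrightarrow> j \<in> J \<Longrightarrow> lam j e \<in> K" using coord_spec by blast
lemma lam_rep: "e \<in> E \<Longrightarrow> lam0 e + (\<Sum>j\<in>J. lam j e * x j) = e" using coord_spec by metis

lemma coord_eq:
  assumes "c0 \<in> K" "\<forall>j\<in>J. c j \<in> K" "e = c0 + (\<Sum>j\<in>J. c j * x j)"
  shows "lam0 e = c0" "\<And>j. j \<in> J \<Longrightarrow> lam j e = c j"
proof -
  have eE: "e \<in> E" using E_intro[OF assms] .
  have cs: "lam0 e \<in> K" "\<forall>j\<in>J. lam j e \<in> K" "lam0 e + (\<Sum>j\<in>J. lam j e * x j) = e"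
    using coord_spec[OF eE] by metis+
  have "lam0 e + (\<Sum>j\<in>J. lam j e * x j) = c0 + (\<Sum>j\<in>J. c j * x j)"
    using cs(3) assms(3) by (rule trans)
  hence u: "lam0 e = c0 \<and> (\<forall>j\<in>J. lam j e = c j)"
    using rep_unique[of "lam0 e" "\<lambda>j. lam j e" c0 c] cs(1,2) assms(1,2) by blast
  show "lam0 e = c0" using u by simp
  show "\<And>j. j \<in> J \<Longrightarrow> lam j e = c j" using u by simp
qed

lemma E_add: assumes "a \<in> E" "b \<in> E" shows "a + b \<in> E"
    and "lam0 (a + b) = lam0 a + lam0 b" and "\<And>j. j \<in> J \<Longrightarrow> lam j (a + b) = lam j a + lam j b"
proof -
  have "(lam0 a + lam0 b) + (\<Sum>j\<in>J. (lam j a + lam j b) * x j) = (lam0 a + (\<Sum>j\<in>J. lam j a * x j)) + (lam0 b + (\<Sum>j\<in>J. lam j b * x j))"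
  proof -
    have "(\<Sum>j\<in>J. (lam j a + lam j b) * x j) = (\<Sum>j\<in>J. lam j a * x j) + (\<Sum>j\<in>J. lam j b * x j)"
      by (simp only: distrib_right sum.distrib)
    thus ?thesis by (simp only: add_ac)
  qed
  also have "\<dots> = a + b" by (simp only: lam_rep[OF assms(1)] lam_rep[OF assms(2)])
  finally have r: "a + b = (lam0 a + lam0 b) + (\<Sum>j\<in>J. (lam j a + lam j b) * x j)" by (rule sym)
  have k: "lam0 a + lam0 b \<in> K" "\<forall>j\<in>J. lam j a + lam j b \<in> K"
    using Kadd[OF lam0_K[OF assms(1)] lam0_K[OF assms(2)]] Kadd[OF lam_K[OF assms(1)] lam_K[OF assms(2)]] by blast+
  show "a + b \<in> E" using E_intro[OF k r] .
  show "lam0 (a + b) = lam0 a + lam0 b" using coord_eq(1)[OF k r] .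
  show "\<And>j. j \<in> J \<Longrightarrow> lam j (a + b) = lam j a + lam j b" using coord_eq(2)[OF k r] .
qed

lemma E_scale: assumes "c \<in> K" "a \<in> E" shows "c * a \<in> E"
    and "lam0 (c * a) = c * lam0 a" and "\<And>j. j \<in> J \<Longrightarrow> lam j (c * a) = c * lam j a"
proof -
  have "(c * lam0 a) + (\<Sum>j\<in>J. (c * lam j a) * x j) = c * (lam0 a + (\<Sum>j\<in>J. lam j a * x j))"
    by (simp add: distrib_left sum_distrib_left mult.assoc)
  also have "\<dots> = c * a" by (simp only: lam_rep[OF assms(2)])
  finally have r: "c * a = (c * lam0 a) + (\<Sum>j\<in>J. (c * lam j a) * x j)" by (rule sym)
  have k: "c * lam0 a \<in> K" "\<forall>j\<in>J. c * lam j a \<in> K"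
    using assms lam0_K lam_K Kmult by auto
  show "c * a \<in> E" using E_intro[OF k r] .
  show "lam0 (c * a) = c * lam0 a" using coord_eq(1)[OF k r] .
  show "\<And>j. j \<in> J \<Longrightarrow> lam j (c * a) = c * lam j a" using coord_eq(2)[OF k r] .
qed

lemma E_K: assumes "k \<in> K" shows "k \<in> E" "lam0 k = k" "\<And>j. j \<in> J \<Longrightarrow> lam j k = 0"
proof -
  have r: "k = k + (\<Sum>j\<in>J. (\<lambda>_. 0) j * x j)" by simp
  have kk: "k \<in> K" "\<forall>j\<in>J. (\<lambda>_. 0::'a) j \<in> K" using assms by auto
  show "k \<in> E" using E_intro[OF kk r] .
  show "lam0 k = k" using coord_eq(1)[OF kk r] .
  show "\<And>j. j \<in> J \<Longrightarrow> lam j k = 0" using coord_eq(2)[OF kk r] by simp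
qed

lemma E_x: assumes "i \<in> J" shows "x i \<in> E" "lam0 (x i) = 0" "\<And>j. j \<in> J \<Longrightarrow> lam j (x i) = (if j = i then 1 else 0)"
proof -
  have "(\<Sum>j\<in>J. (\<lambda>j. if j = i then 1 else 0) j * x j) = (\<Sum>j\<in>J. if j = i then x j else 0)"
    by (rule sum.cong) simp_all
  also have "\<dots> = x i" using assms finJ by (simp add: sum.delta')
  finally have r: "x i = 0 + (\<Sum>j\<in>J. (\<lambda>j. if j = i then 1 else 0) j * x j)" by simp
  have kk: "(0::'a) \<in> K" "\<forall>j\<in>J. (\<lambda>j. if j = i then 1 else (0::'a)) j \<in> K" by auto
  show "x i \<in> E" using E_intro[OF kk r] .
  show "lam0 (x i) = 0" using coord_eq(1)[OF kk r] .
  show "\<And>j. j \<in> J \<Longrightarrow> lam j (x i) = (if j = i then 1 else 0)" using coord_eq(2)[OF kk r] by simp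
qed

lemma E_diff: assumes "a \<in> E" "b \<in> E" shows "a - b \<in> E"
    and "\<And>j. j \<in> J \<Longrightarrow> lam j (a - b) = lam j a - lam j b"
proof -
  have mb: "(-1) * b \<in> E" "\<And>j. j \<in> J \<Longrightarrow> lam j ((-1) * b) = (-1) * lam j b"
    using E_scale[OF Kuminus[OF K1] assms(2)] by blast+
  have ab: "a - b = a + (-1) * b" by simp
  show "a - b \<in> E" unfolding ab using E_add(1)[OF assms(1) mb(1)] .
  show "lam j (a - b) = lam j a - lam j b" if j: "j \<in> J" for j
  proof -
    have "lam j (a - b) = lam j a + lam j ((-1) * b)" unfolding ab using E_add(3)[OF assms(1) mb(1) j] .
    also have "\<dots> = lam j a - lam j b" using mb(2)[OF j] by simp
    finally show ?thesis .
  qed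
qed

lemma Qmax: assumes "e \<in> E" shows "q e = Max ((\<lambda>j. v (lam j e) * \<delta> j) ` J)"
proof -
  have "q e = q ((\<Sum>j\<in>J. lam j e * x j) + lam0 e)"
    using lam_rep[OF assms] by (metis add.commute)
  also have "\<dots> = q (\<Sum>j\<in>J. lam j e * x j)" using q_shift lam0_K[OF assms] by simp
  also have "\<dots> = Max ((\<lambda>j. v (lam j e) * \<delta> j) ` J)" using orth_J lam_K[OF assms] by simp
  finally show ?thesis .
qed

lemma O_le: "e \<in> E \<Longrightarrow> j \<in> J \<Longrightarrow> v (lam j e) * \<delta> j \<le> q e"
  using Qmax finJ by simp

lemma Qmax_le: assumes "e \<in> E" "\<And>j. j \<in> J \<Longrightarrow> v (lam j e) * \<delta> j \<le> m" shows "q e \<le> m"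
  using Qmax[OF assms(1)] finJ J_ne assms(2) by simp

lemma E_inK: assumes "e \<in> E" "\<forall>j\<in>J. lam j e = 0" shows "e \<in> K"
proof -
  have "(\<Sum>j\<in>J. lam j e * x j) = 0" using assms(2) by (intro sum.neutral) simp
  hence "lam0 e = e" using lam_rep[OF assms(1)] by simp
  thus ?thesis using lam0_K[OF assms(1)] by simp
qed

lemma E_sub: "ksubspace K E"
  unfolding ksubspace_def
proof (intro conjI ballI)
  show "0 \<in> E" using E_K(1)[OF K0] .
  show "a + b \<in> E" if "a \<in> E" "b \<in> E" for a b using E_add(1)[OF that] .
  show "c * a \<in> E" if "c \<in> K" "a \<in> E" for c a using E_scale(1)[OF that] .
qed

end

context setting begin

lemma ks0: "ksubspace K D \<Longrightarrow> 0 \<in> D" unfolding ksubspace_def by blast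
lemma ksadd: "ksubspace K D \<Longrightarrow> a \<in> D \<Longrightarrow> b \<in> D \<Longrightarrow> a + b \<in> D" unfolding ksubspace_def by blast
lemma ksscale: "ksubspace K D \<Longrightarrow> c \<in> K \<Longrightarrow> a \<in> D \<Longrightarrow> c * a \<in> D" unfolding ksubspace_def by blast
lemma ksuminus: "ksubspace K D \<Longrightarrow> a \<in> D \<Longrightarrow> - a \<in> D"
  using ksscale[of D "-1" a] Kuminus[OF K1] by simp
lemma ksdiff: "ksubspace K D \<Longrightarrow> a \<in> D \<Longrightarrow> b \<in> D \<Longrightarrow> a - b \<in> D"
  using ksadd[of D a "-b"] ksuminus[of D b] by simp
lemma kssum: assumes "ksubspace K D" "finite S" "\<And>i. i \<in> S \<Longrightarrow> g i \<in> D" shows "sum g S \<in> D"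
  using assms(2,3)
proof (induction S rule: finite_induct)
  case empty then show ?case using ks0[OF assms(1)] by simp
next
  case (insert a S) then show ?case using ksadd[OF assms(1)] by simp
qed

lemma kl_K: "klinear_fun K D f \<Longrightarrow> d \<in> D \<Longrightarrow> f d \<in> K" unfolding klinear_fun_def by blast
lemma kl_add: "klinear_fun K D f \<Longrightarrow> a \<in> D \<Longrightarrow> b \<in> D \<Longrightarrow> f (a + b) = f a + f b" unfolding klinear_fun_def by blast
lemma kl_scale: "klinear_fun K D f \<Longrightarrow> c \<in> K \<Longrightarrow> a \<in> D \<Longrightarrow> f (c * a) = c * f a" unfolding klinear_fun_def by blast
lemma kl_0: assumes "ksubspace K D" "klinear_fun K D f" shows "f 0 = 0"
proof -
  have "f (0 * 0) = 0 * f 0" using kl_scale[OF assms(2) K0 ks0[OF assms(1)]] .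
  thus ?thesis by simp
qed
lemma kl_uminus: assumes "ksubspace K D" "klinear_fun K D f" "a \<in> D" shows "f (- a) = - f a"
  using kl_scale[OF assms(2) Kuminus[OF K1] assms(3)] by simp
lemma kl_diff: assumes "ksubspace K D" "klinear_fun K D f" "a \<in> D" "b \<in> D" shows "f (a - b) = f a - f b"
proof -
  have "f (a + - b) = f a + f (- b)" using kl_add[OF assms(2) assms(3) ksuminus[OF assms(1) assms(4)]] .
  thus ?thesis using kl_uminus[OF assms(1,2,4)] by simp
qed

definition bnd where "bnd D f \<longleftrightarrow> (\<forall>d\<in>D. v (f d) \<le> t * v d)"

lemma v_diff_le: "v (a - b) \<le> max (v a) (v b)" by (rule v_ultra_diff)

lemma Bfind:
  assumes D: "ksubspace K D" and f: "klinear_fun K D f" and fb: "bnd D f"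
    and u: "u \<in> D" and d0: "d0 \<in> D" and ls: "ls \<in> K"
    and H: "\<forall>d\<in>D. \<exists>l\<in>K. v (z - d0 - l * u) \<le> v (z - d)"
    and H2: "\<forall>d\<in>D. v (f u) * v (z - d0 - ls * u) \<le> t * v u * v (z - d)"
  shows "\<forall>d\<in>D. v (f (d0 + ls * u) - f d) \<le> t * v (z - d)"
proof
  fix d assume d: "d \<in> D"
  obtain l where l: "l \<in> K" "v (z - d0 - l * u) \<le> v (z - d)" using H d by blast
  define A1 where "A1 = v (z - d0 - l * u)"
  define As where "As = v (z - d0 - ls * u)"
  have lu: "l * u \<in> D" using ksscale[OF D l(1) u] .
  have lsu: "ls * u \<in> D" using ksscale[OF D ls u] .
  have e1: "d0 + l * u - d \<in> D" using ksdiff[OF D ksadd[OF D d0 lu] d] .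
  have fe: "f (d0 + ls * u) = f d0 + ls * f u" using kl_add[OF f d0 lsu] kl_scale[OF f ls u] by simp
  have fe1: "f (d0 + l * u - d) = f d0 + l * f u - f d"
    using kl_diff[OF D f ksadd[OF D d0 lu] d] kl_add[OF f d0 lu] kl_scale[OF f l(1) u] by simp
  have split: "f (d0 + ls * u) - f d = (ls - l) * f u + f (d0 + l * u - d)"
    using fe fe1 by (simp add: algebra_simps)
  have fu_le: "v (f u) \<le> t * v u" using fb u unfolding bnd_def by blast
  have T1: "v ((ls - l) * f u) \<le> t * v (z - d)"
  proof (cases "u = 0")
    case True
    have "f u = 0" using True kl_0[OF D f] by simp
    thus ?thesis using tpos by simp
  next
    case False
    have vu: "0 < v u" using v_pos[OF False] .
    have "(ls - l) * u = (z - d0 - l * u) - (z - d0 - ls * u)" by (simp add: algebra_simps)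
    hence "v ((ls - l) * u) \<le> max A1 As" unfolding A1_def As_def using v_ultra_diff by metis
    hence m: "v (ls - l) * v u \<le> max A1 As" by (simp add: v_mult)
    have "v (ls - l) * v (f u) * v u \<le> v (f u) * max A1 As"
      using mult_left_mono[OF m v_nonneg[of "f u"]] by (simp add: algebra_simps)
    also have "\<dots> \<le> t * v u * v (z - d)"
    proof (cases "A1 \<le> As")
      case True
      hence "max A1 As = As" by simp
      thus ?thesis using H2 d unfolding As_def by simp
    next
      case False
      hence "max A1 As = A1" by simp
      moreover have "v (f u) * A1 \<le> t * v u * A1"
        using mult_right_mono[OF fu_le] A1_def v_nonneg by simp
      moreover have "t * v u * A1 \<le> t * v u * v (z - d)"
        using mult_left_mono[OF l(2)] tpos vu unfolding A1_def by simp
      ultimately show ?thesis by simp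
    qed
    finally have "v (ls - l) * v (f u) * v u \<le> t * v (z - d) * v u" by (simp add: algebra_simps)
    hence "v (ls - l) * v (f u) \<le> t * v (z - d)" using vu by simp
    thus ?thesis by (simp add: v_mult)
  qed
  have T2: "v (f (d0 + l * u - d)) \<le> t * v (z - d)"
  proof -
    have "v (f (d0 + l * u - d)) \<le> t * v (d0 + l * u - d)" using fb e1 unfolding bnd_def by blast
    also have "d0 + l * u - d = (z - d) - (z - d0 - l * u)" by (simp add: algebra_simps)
    hence "v (d0 + l * u - d) \<le> max (v (z - d)) A1" unfolding A1_def using v_ultra_diff by metis
    hence "v (d0 + l * u - d) \<le> v (z - d)" using l(2) unfolding A1_def by simp
    hence "t * v (d0 + l * u - d) \<le> t * v (z - d)" using tpos by simp
    finally show ?thesis .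
  qed
  have "v (f (d0 + ls * u) - f d) \<le> max (v ((ls - l) * f u)) (v (f (d0 + l * u - d)))"
    unfolding split by (rule v_ultra)
  thus "v (f (d0 + ls * u) - f d) \<le> t * v (z - d)" using T1 T2 by simp
qed

end

context setting begin

definition span1 where "span1 D z = {d + m * z | d m. d \<in> D \<and> m \<in> K}"

lemma span1_sub: assumes "ksubspace K D" "z \<notin> D" shows "ksubspace K (span1 D z)"
  unfolding ksubspace_def
proof (intro conjI ballI)
  show "0 \<in> span1 D z" unfolding span1_def using ks0[OF assms(1)] K0 by force
  fix a b assume "a \<in> span1 D z" "b \<in> span1 D z"
  then obtain d1 m1 d2 m2 where "a = d1 + m1 * z" "d1 \<in> D" "m1 \<in> K" "b = d2 + m2 * z" "d2 \<in> D" "m2 \<in> K"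
    unfolding span1_def by blast
  moreover have "a + b = (d1 + d2) + (m1 + m2) * z" using calculation by (simp add: algebra_simps)
  ultimately show "a + b \<in> span1 D z" unfolding span1_def using ksadd[OF assms(1)] Kadd by blast
next
  fix c a assume c: "c \<in> K" and "a \<in> span1 D z"
  then obtain d1 m1 where "a = d1 + m1 * z" "d1 \<in> D" "m1 \<in> K" unfolding span1_def by blast
  moreover have "c * a = (c * d1) + (c * m1) * z" using calculation by (simp add: algebra_simps)
  ultimately show "c * a \<in> span1 D z" unfolding span1_def using ksscale[OF assms(1) c] Kmult[OF c] by blast
qed

lemma span1_D: assumes "ksubspace K D" shows "D \<subseteq> span1 D z"
proof
  fix d assume "d \<in> D"
  hence "d = d + 0 * z \<and> d \<in> D \<and> (0::'a) \<in> K" by simp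
  thus "d \<in> span1 D z" unfolding span1_def by blast
qed

lemma span1_z: assumes "ksubspace K D" shows "z \<in> span1 D z"
proof -
  have "z = 0 + 1 * z \<and> (0::'a) \<in> D \<and> (1::'a) \<in> K" using ks0[OF assms] by simp
  thus ?thesis unfolding span1_def by blast
qed

lemma span1_E: assumes "ksubspace K D" "D \<subseteq> E" "z \<in> E" shows "span1 D z \<subseteq> E"
proof
  fix w assume "w \<in> span1 D z"
  then obtain d m where "w = d + m * z" "d \<in> D" "m \<in> K" unfolding span1_def by blast
  thus "w \<in> E" using E_add(1) E_scale(1) assms by blast
qed

lemma mu_unique: assumes D: "ksubspace K D" and z: "z \<notin> D"
  and "m1 \<in> K" "m2 \<in> K" "w - m1 * z \<in> D" "w - m2 * z \<in> D" shows "m1 = m2"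
proof (rule ccontr)
  assume ne: "m1 \<noteq> m2"
  have "(w - m2 * z) - (w - m1 * z) \<in> D" using ksdiff[OF D assms(6) assms(5)] .
  hence "(m1 - m2) * z \<in> D" by (simp add: algebra_simps)
  hence "inverse (m1 - m2) * ((m1 - m2) * z) \<in> D"
    using ksscale[OF D Kinverse[OF Kdiff[OF assms(3) assms(4)]]] by blast
  moreover have "inverse (m1 - m2) * ((m1 - m2) * z) = z" using ne by (simp add: mult.assoc[symmetric])
  ultimately have "z \<in> D" by simp
  thus False using z by simp
qed

lemma Ext1:
  assumes D: "ksubspace K D" and f: "klinear_fun K D f" and fb: "bnd D f" and z: "z \<notin> D"
    and b: "b \<in> K" and hb: "\<forall>d\<in>D. v (b - f d) \<le> t * v (z - d)"
  shows "\<exists>g. klinear_fun K (span1 D z) g \<and> (\<forall>d\<in>D. g d = f d) \<and> bnd (span1 D z) g"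
proof -
  define W where "W = span1 D z"
  define mu where "mu w = (SOME m. m \<in> K \<and> w - m * z \<in> D)" for w
  define g where "g w = f (w - mu w * z) + mu w * b" for w
  have mu_eq: "mu (d + m * z) = m" if "d \<in> D" "m \<in> K" for d m
  proof -
    have ex: "m \<in> K \<and> (d + m * z) - m * z \<in> D" using that by simp
    hence sp: "mu (d + m * z) \<in> K \<and> (d + m * z) - mu (d + m * z) * z \<in> D"
      unfolding mu_def by (rule someI)
    show ?thesis using mu_unique[OF D z _ _ _ _] sp ex by blast
  qed
  have g_eq: "g (d + m * z) = f d + m * b" if "d \<in> D" "m \<in> K" for d m
    unfolding g_def using mu_eq[OF that] by simp
  have WD: "w \<in> W \<Longrightarrow> \<exists>d m. w = d + m * z \<and> d \<in> D \<and> m \<in> K" for w unfolding W_def span1_def by blast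
  have lin: "klinear_fun K W g"
    unfolding klinear_fun_def
  proof (intro conjI ballI)
    fix w assume "w \<in> W"
    then obtain d m where dm: "w = d + m * z" "d \<in> D" "m \<in> K" using WD by blast
    show "g w \<in> K" unfolding dm(1) g_eq[OF dm(2,3)] using kl_K[OF f dm(2)] Kmult[OF dm(3) b] Kadd by blast
  next
    fix w1 w2 assume "w1 \<in> W" "w2 \<in> W"
    then obtain d1 m1 d2 m2 where dm: "w1 = d1 + m1 * z" "d1 \<in> D" "m1 \<in> K" "w2 = d2 + m2 * z" "d2 \<in> D" "m2 \<in> K"
      using WD by meson
    have "w1 + w2 = (d1 + d2) + (m1 + m2) * z" using dm by (simp add: algebra_simps)
    hence "g (w1 + w2) = f (d1 + d2) + (m1 + m2) * b"
      using g_eq[OF ksadd[OF D dm(2) dm(5)] Kadd[OF dm(3) dm(6)]] by simp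
    also have "\<dots> = g w1 + g w2" using g_eq[OF dm(2,3)] g_eq[OF dm(5,6)] kl_add[OF f dm(2) dm(5)] dm(1,4)
      by (simp add: algebra_simps)
    finally show "g (w1 + w2) = g w1 + g w2" .
  next
    fix c w assume c: "c \<in> K" and "w \<in> W"
    then obtain d m where dm: "w = d + m * z" "d \<in> D" "m \<in> K" using WD by blast
    have "c * w = (c * d) + (c * m) * z" using dm by (simp add: algebra_simps)
    hence "g (c * w) = f (c * d) + (c * m) * b"
      using g_eq[OF ksscale[OF D c dm(2)] Kmult[OF c dm(3)]] by simp
    also have "\<dots> = c * g w" using g_eq[OF dm(2,3)] kl_scale[OF f c dm(2)] dm(1)
      by (simp add: algebra_simps)
    finally show "g (c * w) = c * g w" .
  qed
  have ext: "\<forall>d\<in>D. g d = f d"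
  proof
    fix d assume d: "d \<in> D"
    have "g (d + 0 * z) = f d + 0 * b" using g_eq[OF d K0] .
    thus "g d = f d" by simp
  qed
  have bd: "bnd W g" unfolding bnd_def
  proof
    fix w assume "w \<in> W"
    then obtain d m where dm: "w = d + m * z" "d \<in> D" "m \<in> K" using WD by blast
    show "v (g w) \<le> t * v w"
    proof (cases "m = 0")
      case True
      thus ?thesis using dm g_eq[OF dm(2,3)] fb unfolding bnd_def by simp
    next
      case False
      define d' where "d' = (- inverse m) * d"
      have d'D: "d' \<in> D" unfolding d'_def using ksscale[OF D Kuminus[OF Kinverse[OF dm(3)]] dm(2)] .
      have fd': "f d' = (- inverse m) * f d" unfolding d'_def using kl_scale[OF f Kuminus[OF Kinverse[OF dm(3)]] dm(2)] .
      have e1: "f d + m * b = m * (b - f d')" using False fd' by (simp add: field_simps)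
      have e2: "d + m * z = m * (z - d')" using False unfolding d'_def by (simp add: field_simps)
      have "v (g w) = v m * v (b - f d')" unfolding dm(1) g_eq[OF dm(2,3)] e1 by (rule v_mult)
      also have "\<dots> \<le> v m * (t * v (z - d'))" using hb d'D mult_left_mono v_nonneg by blast
      also have "\<dots> = t * v (m * (z - d'))" by (simp add: v_mult)
      also have "\<dots> = t * v w" unfolding dm(1) e2 ..
      finally show ?thesis .
    qed
  qed
  show ?thesis using lin ext bd unfolding W_def by blast
qed

end

context setting begin

lemma q_ultra_E: assumes "a \<in> E" "b \<in> E" shows "q (a + b) \<le> max (q a) (q b)"
proof (rule Qmax_le[OF E_add(1)[OF assms]])
  fix j assume j: "j \<in> J"
  have "v (lam j (a + b)) = v (lam j a + lam j b)" using E_add(3)[OF assms j] by simp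
  also have "\<dots> \<le> max (v (lam j a)) (v (lam j b))" by (rule v_ultra)
  finally have "v (lam j (a + b)) * \<delta> j \<le> max (v (lam j a)) (v (lam j b)) * \<delta> j"
    using \<delta>_pos[OF j] by simp
  also have "\<dots> = max (v (lam j a) * \<delta> j) (v (lam j b) * \<delta> j)"
    using \<delta>_pos[OF j] by (simp add: max_mult_distrib_right)
  also have "\<dots> \<le> max (q a) (q b)" by (rule max.mono[OF O_le[OF assms(1) j] O_le[OF assms(2) j]])
  finally show "v (lam j (a + b)) * \<delta> j \<le> max (q a) (q b)" .
qed

lemma q_le_v: "q e \<le> v e" using q_le[of 0 e] by simp

definition meas where "meas D = card {j\<in>J. \<exists>d\<in>D. lam j d \<noteq> 0}"

lemma pivot:
  assumes D: "ksubspace K D" "D \<subseteq> E" and d: "d \<in> D" and j0: "j0 \<in> J" "lam j0 d \<noteq> 0"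
  shows "\<exists>j1\<in>J. \<exists>u1\<in>D. lam j1 u1 = 1 \<and> q u1 \<le> \<delta> j1"
proof -
  define F where "F j = v (lam j d) * \<delta> j" for j
  have fin: "finite (F ` J)" using finJ by simp
  have ne: "F ` J \<noteq> {}" using J_ne by simp
  obtain j1 where j1: "j1 \<in> J" "F j1 = Max (F ` J)" using Max_in[OF fin ne] by auto
  have dE: "d \<in> E" using d D(2) by blast
  have "F j0 > 0" unfolding F_def using v_pos[OF j0(2)] \<delta>_pos[OF j0(1)] by simp
  moreover have "F j0 \<le> F j1" using j1 j0(1) fin by simp
  ultimately have "F j1 > 0" by simp
  hence l1: "lam j1 d \<noteq> 0" unfolding F_def by auto
  define c where "c = inverse (lam j1 d)"
  have cK: "c \<in> K" unfolding c_def using Kinverse[OF lam_K[OF dE j1(1)]] .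
  define u1 where "u1 = c * d"
  have u1D: "u1 \<in> D" unfolding u1_def using ksscale[OF D(1) cK d] .
  have lu: "lam j u1 = c * lam j d" if "j \<in> J" for j unfolding u1_def using E_scale(3)[OF cK dE that] .
  have one: "lam j1 u1 = 1" using lu[OF j1(1)] l1 unfolding c_def by simp
  have vc: "v c * v (lam j1 d) = 1" unfolding c_def using l1 by (simp add: v_inverse)
  have "q u1 \<le> \<delta> j1"
  proof (rule Qmax_le)
    show "u1 \<in> E" using u1D D(2) by blast
    fix j assume j: "j \<in> J"
    have "v (lam j u1) * \<delta> j = v c * F j" unfolding lu[OF j] F_def by (simp add: v_mult)
    also have "\<dots> \<le> v c * F j1" using j1 j fin by (intro mult_left_mono) simp_all
    also have "\<dots> = \<delta> j1" unfolding F_def using vc by (simp add: mult.assoc[symmetric])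
    finally show "v (lam j u1) * \<delta> j \<le> \<delta> j1" .
  qed
  thus ?thesis using one u1D j1(1) by blast
qed

lemma kernel_sub:
  assumes D: "ksubspace K D" "D \<subseteq> E" and j1: "j1 \<in> J"
  shows "ksubspace K {d\<in>D. lam j1 d = 0}" "{d\<in>D. lam j1 d = 0} \<subseteq> E"
proof -
  show "{d\<in>D. lam j1 d = 0} \<subseteq> E" using D(2) by blast
  show "ksubspace K {d\<in>D. lam j1 d = 0}"
    unfolding ksubspace_def
  proof (intro conjI ballI)
    show "0 \<in> {d\<in>D. lam j1 d = 0}" using ks0[OF D(1)] E_K(3)[OF K0 j1] by simp
    fix a b assume a: "a \<in> {d\<in>D. lam j1 d = 0}" and b: "b \<in> {d\<in>D. lam j1 d = 0}"
    have "a \<in> E" "b \<in> E" using a b D(2) by blast+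
    thus "a + b \<in> {d\<in>D. lam j1 d = 0}" using E_add(3)[OF _ _ j1] ksadd[OF D(1)] a b by simp
  next
    fix c a assume c: "c \<in> K" and a: "a \<in> {d\<in>D. lam j1 d = 0}"
    have "a \<in> E" using a D(2) by blast
    thus "c * a \<in> {d\<in>D. lam j1 d = 0}" using E_scale(3)[OF c _ j1] ksscale[OF D(1) c] a by simp
  qed
qed

lemma meas_less:
  assumes "u1 \<in> D" "lam j1 u1 = 1" "j1 \<in> J"
  shows "meas {d\<in>D. lam j1 d = 0} < meas D"
proof -
  have sub: "{j\<in>J. \<exists>d\<in>{d\<in>D. lam j1 d = 0}. lam j d \<noteq> 0} \<subset> {j\<in>J. \<exists>d\<in>D. lam j d \<noteq> 0}"
  proof
    show "{j\<in>J. \<exists>d\<in>{d\<in>D. lam j1 d = 0}. lam j d \<noteq> 0} \<subseteq> {j\<in>J. \<exists>d\<in>D. lam j d \<noteq> 0}" by blast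
    have "j1 \<in> {j\<in>J. \<exists>d\<in>D. lam j d \<noteq> 0}" using assms by force
    moreover have "j1 \<notin> {j\<in>J. \<exists>d\<in>{d\<in>D. lam j1 d = 0}. lam j d \<noteq> 0}" by blast
    ultimately show "{j\<in>J. \<exists>d\<in>{d\<in>D. lam j1 d = 0}. lam j d \<noteq> 0} \<noteq> {j\<in>J. \<exists>d\<in>D. lam j d \<noteq> 0}" by blast
  qed
  have "finite {j\<in>J. \<exists>d\<in>D. lam j d \<noteq> 0}" using finJ by simp
  thus ?thesis unfolding meas_def using psubset_card_mono[OF _ sub] by blast
qed

lemma Prox: "ksubspace K D \<Longrightarrow> D \<subseteq> E \<Longrightarrow> a \<in> E \<Longrightarrow> \<exists>d0\<in>D. \<forall>d\<in>D. q (a - d0) \<le> q (a - d)"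
proof (induction "meas D" arbitrary: D a rule: less_induct)
  case less
  note D = less.prems(1,2) and aE = less.prems(3)
  show ?case
  proof (cases "\<exists>d\<in>D. \<exists>j\<in>J. lam j d \<noteq> 0")
    case False
    have "q (a - d) = q (a - 0)" if d: "d \<in> D" for d
    proof -
      have dE: "d \<in> E" using d D(2) by blast
      have "d \<in> K" using E_inK[OF dE] False d by blast
      hence "q (a + (- d)) = q a" using q_shift Kuminus by blast
      thus ?thesis by simp
    qed
    thus ?thesis using ks0[OF D(1)] by (intro bexI[of _ 0]) simp_all
  next
    case True
    then obtain d j0 where d: "d \<in> D" "j0 \<in> J" "lam j0 d \<noteq> 0" by blast
    obtain j1 u1 where ju: "j1 \<in> J" "u1 \<in> D" "lam j1 u1 = 1" "q u1 \<le> \<delta> j1"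
      using pivot[OF D d] by blast
    define D1 where "D1 = {d\<in>D. lam j1 d = 0}"
    have D1: "ksubspace K D1" "D1 \<subseteq> E" unfolding D1_def using kernel_sub[OF D ju(1)] by blast+
    have lt: "meas D1 < meas D" unfolding D1_def using meas_less[OF ju(2,3,1)] .
    have u1E: "u1 \<in> E" using ju(2) D(2) by blast
    define a' where "a' = a - lam j1 a * u1"
    have la: "lam j1 a \<in> K" using lam_K[OF aE ju(1)] .
    have lau: "lam j1 a * u1 \<in> E" using E_scale(1)[OF la u1E] .
    have a'E: "a' \<in> E" unfolding a'_def using E_diff(1)[OF aE lau] .
    have la': "lam j1 a' = 0" unfolding a'_def using E_diff(2)[OF aE lau ju(1)] E_scale(3)[OF la u1E ju(1)] ju(3) by simp
    obtain d1 where d1: "d1 \<in> D1" "\<forall>d'\<in>D1. q (a' - d1) \<le> q (a' - d')"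
      using less.hyps[OF lt D1 a'E] by blast
    define d0 where "d0 = lam j1 a * u1 + d1"
    have d0D: "d0 \<in> D" unfolding d0_def using ksadd[OF D(1) ksscale[OF D(1) la ju(2)]] d1(1) unfolding D1_def by blast
    have ad0: "a - d0 = a' - d1" unfolding d0_def a'_def by simp
    have "\<forall>d\<in>D. q (a - d0) \<le> q (a - d)"
    proof
      fix d assume dD: "d \<in> D"
      have dE: "d \<in> E" using dD D(2) by blast
      define k where "k = lam j1 d"
      have kK: "k \<in> K" unfolding k_def using lam_K[OF dE ju(1)] .
      define d' where "d' = d - k * u1"
      have ku: "k * u1 \<in> E" using E_scale(1)[OF kK u1E] .
      have d'D1: "d' \<in> D1" unfolding D1_def d'_def
        using ksdiff[OF D(1) dD ksscale[OF D(1) kK ju(2)]] E_diff(2)[OF dE ku ju(1)] E_scale(3)[OF kK u1E ju(1)] ju(3)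
        unfolding k_def by simp
      have d'E: "d' \<in> E" using d'D1 D1(2) by blast
      define g where "g = a' - d'"
      have gE: "g \<in> E" unfolding g_def using E_diff(1)[OF a'E d'E] .
      have lg: "lam j1 g = 0" unfolding g_def using E_diff(2)[OF a'E d'E ju(1)] la' d'D1 unfolding D1_def by simp
      define k' where "k' = k - lam j1 a"
      have k'K: "k' \<in> K" unfolding k'_def using Kdiff[OF kK la] .
      have k'u: "k' * u1 \<in> E" using E_scale(1)[OF k'K u1E] .
      have ad: "a - d = g - k' * u1" unfolding g_def a'_def d'_def k'_def by (simp add: algebra_simps)
      have gkE: "g - k' * u1 \<in> E" using E_diff(1)[OF gE k'u] .
      have lgk: "lam j1 (g - k' * u1) = - k'"
        using E_diff(2)[OF gE k'u ju(1)] E_scale(3)[OF k'K u1E ju(1)] lg ju(3) by simp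
      have c1: "v k' * \<delta> j1 \<le> q (g - k' * u1)" using O_le[OF gkE ju(1)] lgk by simp
      have c2: "q (k' * u1) \<le> v k' * \<delta> j1" using q_scale[OF k'K] ju(4) mult_left_mono v_nonneg by metis
      have "q g = q ((g - k' * u1) + k' * u1)" by simp
      also have "\<dots> \<le> max (q (g - k' * u1)) (q (k' * u1))" using q_ultra_E[OF gkE k'u] .
      also have "\<dots> = q (g - k' * u1)" using c1 c2 by simp
      finally have "q g \<le> q (a - d)" unfolding ad .
      moreover have "q (a' - d1) \<le> q g" unfolding g_def using d1(2) d'D1 by blast
      ultimately show "q (a - d0) \<le> q (a - d)" unfolding ad0 by simp
    qed
    thus ?thesis using d0D by blast
  qed
qed

end

context setting begin

lemma Rho: "ksubspace K D \<Longrightarrow> D \<subseteq> E \<Longrightarrow> (\<forall>d\<in>D. d \<in> K \<longrightarrow> d = 0) \<Longrightarrow> (\<exists>d\<in>D. d \<noteq> 0)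
  \<Longrightarrow> \<exists>u\<in>D. u \<noteq> 0 \<and> (\<forall>d\<in>D. d \<noteq> 0 \<longrightarrow> v d / q d \<le> v u / q u)"
proof (induction "meas D" arbitrary: D rule: less_induct)
  case less
  note D = less.prems(1,2) and DK = less.prems(3) and nz = less.prems(4)
  have qpos: "0 < q d" if "d \<in> D" "d \<noteq> 0" for d using q_pos DK that by blast
  show ?case
  proof (cases "\<exists>d\<in>D. \<exists>j\<in>J. lam j d \<noteq> 0")
    case False
    obtain d where d: "d \<in> D" "d \<noteq> 0" using nz by blast
    have "d \<in> E" using d D(2) by blast
    hence "d \<in> K" using E_inK False d by blast
    thus ?thesis using DK d by blast
  next
    case True
    then obtain d j0 where d: "d \<in> D" "j0 \<in> J" "lam j0 d \<noteq> 0" by blast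
    obtain j1 u1 where ju: "j1 \<in> J" "u1 \<in> D" "lam j1 u1 = 1" "q u1 \<le> \<delta> j1"
      using pivot[OF D d] by blast
    have u1nz: "u1 \<noteq> 0" using ju(3) E_K(3)[OF K0 ju(1)] by auto
    define D1 where "D1 = {d\<in>D. lam j1 d = 0}"
    have D1: "ksubspace K D1" "D1 \<subseteq> E" unfolding D1_def using kernel_sub[OF D ju(1)] by blast+
    have lt: "meas D1 < meas D" unfolding D1_def using meas_less[OF ju(2,3,1)] .
    have D1D: "D1 \<subseteq> D" unfolding D1_def by blast
    have "\<exists>u\<in>D. u \<noteq> 0 \<and> v u1 / q u1 \<le> v u / q u \<and> (\<forall>d\<in>D1. d \<noteq> 0 \<longrightarrow> v d / q d \<le> v u / q u)"
    proof (cases "\<exists>d\<in>D1. d \<noteq> 0")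
      case False
      thus ?thesis using ju(2) u1nz by blast
    next
      case True
      have DK1: "\<forall>d\<in>D1. d \<in> K \<longrightarrow> d = 0" using DK D1D by blast
      obtain u' where u': "u' \<in> D1" "u' \<noteq> 0" "\<forall>d\<in>D1. d \<noteq> 0 \<longrightarrow> v d / q d \<le> v u' / q u'"
        using less.hyps[OF lt D1 DK1 True] by blast
      show ?thesis
      proof (cases "v u' / q u' \<le> v u1 / q u1")
        case True
        thus ?thesis using ju(2) u1nz u'(3) by force
      next
        case False
        thus ?thesis using u' D1D by force
      qed
    qed
    then obtain u where u: "u \<in> D" "u \<noteq> 0" "v u1 / q u1 \<le> v u / q u"
      "\<forall>d\<in>D1. d \<noteq> 0 \<longrightarrow> v d / q d \<le> v u / q u" by blast
    have u1E: "u1 \<in> E" using ju(2) D(2) by blast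
    have "\<forall>d\<in>D. d \<noteq> 0 \<longrightarrow> v d / q d \<le> v u / q u"
    proof (intro ballI impI)
      fix d assume dD: "d \<in> D" and dnz: "d \<noteq> 0"
      have dE: "d \<in> E" using dD D(2) by blast
      define k where "k = lam j1 d"
      have kK: "k \<in> K" unfolding k_def using lam_K[OF dE ju(1)] .
      define d' where "d' = d - k * u1"
      have ku: "k * u1 \<in> E" using E_scale(1)[OF kK u1E] .
      have kuD: "k * u1 \<in> D" using ksscale[OF D(1) kK ju(2)] .
      have d'D1: "d' \<in> D1" unfolding D1_def d'_def
        using ksdiff[OF D(1) dD kuD] E_diff(2)[OF dE ku ju(1)] E_scale(3)[OF kK u1E ju(1)] ju(3)
        unfolding k_def by simp
      have d'D: "d' \<in> D" using d'D1 D1D by blast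
      have qd: "0 < q d" using qpos[OF dD dnz] .
      have g1: "q (k * u1) \<le> q d"
      proof -
        have "q (k * u1) = v k * q u1" using q_scale[OF kK] .
        also have "\<dots> \<le> v k * \<delta> j1" using ju(4) mult_left_mono v_nonneg by blast
        also have "\<dots> \<le> q d" using O_le[OF dE ju(1)] unfolding k_def .
        finally show ?thesis .
      qed
      have g2: "q d' \<le> q d"
      proof -
        have mk: "(- k) * u1 \<in> E" using E_scale(1)[OF Kuminus[OF kK] u1E] .
        have "d' = d + (- k) * u1" unfolding d'_def by simp
        hence "q d' \<le> max (q d) (q ((- k) * u1))" using q_ultra_E[OF dE mk] by simp
        moreover have "q ((- k) * u1) = q (k * u1)" using q_scale[OF Kuminus[OF kK]] q_scale[OF kK] by simp
        ultimately show ?thesis using g1 by simp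
      qed
      have "d = k * u1 + d'" unfolding d'_def by simp
      hence vd: "v d \<le> max (v (k * u1)) (v d')" using v_ultra by metis
      show "v d / q d \<le> v u / q u"
      proof (cases "v d \<le> v (k * u1)")
        case True
        have knz: "k \<noteq> 0" using True dnz v_pos[OF dnz] by auto
        have kunz: "k * u1 \<noteq> 0" using knz u1nz by simp
        have qku: "0 < q (k * u1)" using qpos[OF kuD kunz] .
        have "v d / q d \<le> v (k * u1) / q (k * u1)"
          using frac_le[OF v_nonneg True qku g1] .
        also have "\<dots> = v u1 / q u1"
          using q_scale[OF kK] v_mult[of k u1] v_pos[OF knz] knz by simp
        also have "\<dots> \<le> v u / q u" using u(3) .
        finally show ?thesis .
      next
        case False
        hence vd': "v d \<le> v d'" using vd by simp
        have d'nz: "d' \<noteq> 0" using vd' v_pos[OF dnz] by auto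
        have qd': "0 < q d'" using qpos[OF d'D d'nz] .
        have "v d / q d \<le> v d' / q d'" using frac_le[OF v_nonneg vd' qd' g2] .
        also have "\<dots> \<le> v u / q u" using u(4) d'D1 d'nz by blast
        finally show ?thesis .
      qed
    qed
    thus ?thesis using u(1,2) by blast
  qed
qed

end

context setting begin

lemma CaseA:
  assumes tnV: "t \<notin> value_group K v" and D: "ksubspace K D" "D \<subseteq> E" and f: "klinear_fun K D f"
    and fb: "bnd D f" and one: "1 \<in> D" and j: "j \<in> J" and xj: "x j \<notin> D"
  shows "\<exists>b\<in>K. \<forall>d\<in>D. v (b - f d) \<le> t * v (x j - d)"
proof -
  define z where "z = x j"
  have zE: "z \<in> E" unfolding z_def using E_x(1)[OF j] .
  have zD: "z \<notin> D" unfolding z_def using xj .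
  obtain d0 where d0: "d0 \<in> D" "\<forall>d\<in>D. q (z - d0) \<le> q (z - d)" using Prox[OF D zE] by blast
  have KD: "k \<in> D" if "k \<in> K" for k using ksscale[OF D(1) that one] by simp
  define s where "s = q (z - d0)"
  have "z - d0 \<notin> K"
  proof
    assume "z - d0 \<in> K"
    hence "(z - d0) + d0 \<in> D" using ksadd[OF D(1) KD d0(1)] by blast
    thus False using zD by simp
  qed
  hence spos: "0 < s" unfolding s_def using q_pos by blast
  have sle: "s \<le> v (z - d)" if "d \<in> D" for d
    using d0(2) that q_le_v[of "z - d"] unfolding s_def by fastforce
  have H: "\<forall>d\<in>D. \<exists>l\<in>K. v (z - d0 - l * 1) \<le> v (z - d)"
  proof
    fix d assume dD: "d \<in> D"
    have "z - d \<noteq> 0" using zD dD by auto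
    hence "q (z - d) < v (z - d)" using q_lt by blast
    hence "q (z - d0) < v (z - d)" using d0(2) dD by fastforce
    then obtain a where "a \<in> K" "v (z - d0 - a) < v (z - d)" using q_approx by blast
    thus "\<exists>l\<in>K. v (z - d0 - l * 1) \<le> v (z - d)" by (intro bexI[of _ a]) simp_all
  qed
  have "\<exists>ls\<in>K. \<forall>d\<in>D. v (f 1) * v (z - d0 - ls * 1) \<le> t * v 1 * v (z - d)"
  proof (cases "f 1 = 0")
    case True
    thus ?thesis using tpos by (intro bexI[of _ 0]) simp_all
  next
    case False
    have f1K: "f 1 \<in> K" using kl_K[OF f one] .
    have "v (f 1) \<le> t * v 1" using fb one unfolding bnd_def by blast
    hence lt: "v (f 1) < t" using tV[OF tnV f1K one_neq_zero] by simp
    have vf: "0 < v (f 1)" using v_pos[OF False] .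
    define R where "R = t * s / v (f 1)"
    have "s < R" unfolding R_def using lt vf spos by (simp add: field_simps)
    then obtain a where a: "a \<in> K" "v (z - d0 - a) < R" using q_approx unfolding s_def by blast
    have "\<forall>d\<in>D. v (f 1) * v (z - d0 - a * 1) \<le> t * v 1 * v (z - d)"
    proof
      fix d assume dD: "d \<in> D"
      have "v (f 1) * v (z - d0 - a * 1) \<le> v (f 1) * R" using a(2) vf by simp
      also have "\<dots> = t * s" unfolding R_def using vf False by simp
      also have "\<dots> \<le> t * v (z - d)" using sle[OF dD] tpos by simp
      finally show "v (f 1) * v (z - d0 - a * 1) \<le> t * v 1 * v (z - d)" by simp
    qed
    thus ?thesis using a(1) by blast
  qed
  then obtain ls where ls: "ls \<in> K" "\<forall>d\<in>D. v (f 1) * v (z - d0 - ls * 1) \<le> t * v 1 * v (z - d)" by blast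
  have b: "\<forall>d\<in>D. v (f (d0 + ls * 1) - f d) \<le> t * v (z - d)"
    using Bfind[OF D(1) f fb one d0(1) ls(1) H ls(2)] .
  have "f (d0 + ls * 1) \<in> K" using kl_K[OF f ksadd[OF D(1) d0(1) KD[OF ls(1)]]] by simp
  thus ?thesis using b unfolding z_def by blast
qed

lemma CaseB:
  assumes tnV: "t \<notin> value_group K v" and D: "ksubspace K D" "D \<subseteq> E" and f: "klinear_fun K D f"
    and fb: "bnd D f" and one: "1 \<notin> D"
  shows "\<exists>b\<in>K. \<forall>d\<in>D. v (b - f d) \<le> t * v (1 - d)"
proof (cases "\<forall>d\<in>D. d = 0")
  case True
  have "\<forall>d\<in>D. v (0 - f d) \<le> t * v (1 - d)"
  proof
    fix d assume "d \<in> D"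
    hence "d = 0" using True by blast
    thus "v (0 - f d) \<le> t * v (1 - d)" using kl_0[OF D(1) f] tpos by simp
  qed
  thus ?thesis using K0 by blast
next
  case False
  hence nz: "\<exists>d\<in>D. d \<noteq> 0" by blast
  have DK: "\<forall>d\<in>D. d \<in> K \<longrightarrow> d = 0"
  proof (intro ballI impI)
    fix d assume "d \<in> D" "d \<in> K"
    show "d = 0"
    proof (rule ccontr)
      assume "d \<noteq> 0"
      hence "inverse d * d = 1" by simp
      moreover have "inverse d * d \<in> D" using ksscale[OF D(1) Kinverse[OF \<open>d \<in> K\<close>] \<open>d \<in> D\<close>] .
      ultimately show False using one by simp
    qed
  qed
  obtain u where u: "u \<in> D" "u \<noteq> 0" "\<forall>d\<in>D. d \<noteq> 0 \<longrightarrow> v d / q d \<le> v u / q u"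
    using Rho[OF D DK nz] by blast
  have uK: "u \<notin> K" using DK u by blast
  have qu: "0 < q u" using q_pos[OF uK] .
  have vu: "0 < v u" using v_pos[OF u(2)] .
  have quv: "q u < v u" using q_lt[OF u(2)] .
  have key: "q u \<le> v u * v (1 - d)" "v (1 - d) < 1 \<Longrightarrow> q u < v u * v (1 - d)" if dD: "d \<in> D" for d
  proof -
    have strict: "q u < v u * v (1 - d)" if lt1: "v (1 - d) < 1"
    proof -
      have dnz: "d \<noteq> 0" using lt1 by auto
      have "v (1 - d) < v 1" using lt1 by simp
      hence "v (1 - (1 - d)) = v 1" by (rule v_strict_diff)
      hence vd: "v d = 1" by simp
      have d1: "1 - d \<noteq> 0" using one dD by auto
      have "q (1 - d) = q d"
      proof -
        have "q (- d + 1) = q (- d)" using q_shift[OF K1] .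
        thus ?thesis using q_uminus by simp
      qed
      hence qd: "q d < v (1 - d)" using q_lt[OF d1] by simp
      have qdp: "0 < q d" using q_pos DK dD dnz by blast
      have "v d / q d \<le> v u / q u" using u(3) dD dnz by blast
      hence "1 / q d \<le> v u / q u" using vd by simp
      hence "q u \<le> v u * q d" using qdp qu by (simp add: field_simps)
      also have "\<dots> < v u * v (1 - d)" using qd vu by simp
      finally show ?thesis .
    qed
    show "v (1 - d) < 1 \<Longrightarrow> q u < v u * v (1 - d)" using strict .
    show "q u \<le> v u * v (1 - d)"
    proof (cases "v (1 - d) < 1")
      case True then show ?thesis using strict by simp
    next
      case False
      hence "v u * 1 \<le> v u * v (1 - d)" using vu by (intro mult_left_mono) simp_all
      thus ?thesis using quv by simp
    qed
  qed
  have approx: "\<exists>a\<in>K. a \<noteq> 0 \<and> v (1 - 0 - inverse a * u) = v (u - a) / v u \<and> v (u - a) < r"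
    if qr: "q u < r" and rv: "r \<le> v u" for r
  proof -
    obtain a where a: "a \<in> K" "v (u - a) < r" using q_approx[OF qr] by blast
    have "v (u - a) < v u" using a(2) rv by simp
    hence "v (u - (u - a)) = v u" by (rule v_strict_diff)
    hence va: "v a = v u" by simp
    hence anz: "a \<noteq> 0" using vu by auto
    have "1 - 0 - inverse a * u = (a - u) / a" using anz by (simp add: field_simps)
    hence "v (1 - 0 - inverse a * u) = v (a - u) / v a" by (simp add: v_divide)
    also have "\<dots> = v (u - a) / v u" using va v_sym by simp
    finally show ?thesis using a anz by blast
  qed
  have H: "\<forall>d\<in>D. \<exists>l\<in>K. v (1 - 0 - l * u) \<le> v (1 - d)"
  proof
    fix d assume dD: "d \<in> D"
    show "\<exists>l\<in>K. v (1 - 0 - l * u) \<le> v (1 - d)"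
    proof (cases "v (1 - d) < 1")
      case False
      thus ?thesis by (intro bexI[of _ 0]) simp_all
    next
      case True
      define r where "r = min (v u) (v u * v (1 - d))"
      have "q u < r" unfolding r_def using quv key(2)[OF dD True] by simp
      then obtain a where a: "a \<in> K" "a \<noteq> 0" "v (1 - 0 - inverse a * u) = v (u - a) / v u" "v (u - a) < r"
        using approx[of r] unfolding r_def by auto
      have "v (u - a) < v u * v (1 - d)" using a(4) unfolding r_def by simp
      hence "v (u - a) / v u < v (1 - d)" using vu by (simp add: field_simps)
      thus ?thesis using a(1,3) Kinverse[OF a(1)] by (intro bexI[of _ "inverse a"]) simp_all
    qed
  qed
  have "\<exists>ls\<in>K. \<forall>d\<in>D. v (f u) * v (1 - 0 - ls * u) \<le> t * v u * v (1 - d)"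
  proof (cases "f u = 0")
    case True
    thus ?thesis using tpos vu by (intro bexI[of _ 0]) simp_all
  next
    case False
    have fuK: "f u \<in> K" using kl_K[OF f u(1)] .
    have "v (f u) \<le> t * v u" using fb u(1) unfolding bnd_def by blast
    hence lt: "v (f u) < t * v u" using tV[OF tnV fuK u(2)] by simp
    have vf: "0 < v (f u)" using v_pos[OF False] .
    define R where "R = t * v u * q u / v (f u)"
    have "q u < R" unfolding R_def using lt vf qu by (simp add: field_simps)
    define r where "r = min (v u) R"
    have "q u < r" unfolding r_def using quv \<open>q u < R\<close> by simp
    then obtain a where a: "a \<in> K" "a \<noteq> 0" "v (1 - 0 - inverse a * u) = v (u - a) / v u" "v (u - a) < r"
      using approx[of r] unfolding r_def by auto
    have "\<forall>d\<in>D. v (f u) * v (1 - 0 - inverse a * u) \<le> t * v u * v (1 - d)"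
    proof
      fix d assume dD: "d \<in> D"
      have "v (u - a) < R" using a(4) unfolding r_def by simp
      hence "v (f u) * v (u - a) < v (f u) * R" using vf by simp
      also have "\<dots> = t * v u * q u" unfolding R_def using vf False by simp
      finally have "v (f u) * v (u - a) / v u < t * q u" using vu by (simp add: field_simps)
      also have "\<dots> \<le> t * (v u * v (1 - d))" using key(1)[OF dD] tpos by simp
      finally show "v (f u) * v (1 - 0 - inverse a * u) \<le> t * v u * v (1 - d)"
        unfolding a(3) by (simp add: algebra_simps)
    qed
    thus ?thesis using Kinverse[OF a(1)] by blast
  qed
  then obtain ls where ls: "ls \<in> K" "\<forall>d\<in>D. v (f u) * v (1 - 0 - ls * u) \<le> t * v u * v (1 - d)" by blast
  have b: "\<forall>d\<in>D. v (f (0 + ls * u) - f d) \<le> t * v (1 - d)"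
    using Bfind[OF D(1) f fb u(1) ks0[OF D(1)] ls(1) H ls(2)] .
  have "f (0 + ls * u) \<in> K" using kl_K[OF f ksscale[OF D(1) ls(1) u(1)]] by simp
  thus ?thesis using b by blast
qed

end

context setting begin

definition BB where "BB = insert 1 (x ` J)"
definition cnt where "cnt D = card {b\<in>BB. b \<notin> D}"

lemma cnt_less: assumes "D \<subseteq> W" "z \<in> W" "z \<in> BB" "z \<notin> D" shows "cnt W < cnt D"
proof -
  have sub: "{b\<in>BB. b \<notin> W} \<subset> {b\<in>BB. b \<notin> D}" using assms by blast
  have "finite {b\<in>BB. b \<notin> D}" unfolding BB_def using finJ by simp
  thus ?thesis unfolding cnt_def using psubset_card_mono[OF _ sub] by blast
qed

lemma ExtAll:
  assumes tnV: "t \<notin> value_group K v"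
  shows "ksubspace K D \<Longrightarrow> D \<subseteq> E \<Longrightarrow> klinear_fun K D f \<Longrightarrow> bnd D f \<Longrightarrow>
    \<exists>g. klinear_fun K E g \<and> (\<forall>d\<in>D. g d = f d) \<and> bnd E g"
proof (induction "cnt D" arbitrary: D f rule: less_induct)
  case less
  note D = less.prems(1,2) and f = less.prems(3) and fb = less.prems(4)
  have oneE: "1 \<in> E" using E_K(1)[OF K1] .
  have step: "\<exists>g. klinear_fun K E g \<and> (\<forall>d\<in>D. g d = f d) \<and> bnd E g"
    if zE: "z \<in> E" and zB: "z \<in> BB" and zD: "z \<notin> D" and b: "b \<in> K" and hb: "\<forall>d\<in>D. v (b - f d) \<le> t * v (z - d)" for z b
  proof -
    obtain g1 where g1: "klinear_fun K (span1 D z) g1" "\<forall>d\<in>D. g1 d = f d" "bnd (span1 D z) g1"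
      using Ext1[OF D(1) f fb zD b hb] by blast
    have W: "ksubspace K (span1 D z)" "span1 D z \<subseteq> E" using span1_sub[OF D(1) zD] span1_E[OF D(1) D(2) zE] by blast+
    have lt: "cnt (span1 D z) < cnt D" using cnt_less[OF span1_D[OF D(1)] span1_z[OF D(1)] zB zD] .
    obtain g where g: "klinear_fun K E g" "\<forall>w\<in>span1 D z. g w = g1 w" "bnd E g"
      using less.hyps[OF lt W g1(1) g1(3)] by blast
    have "\<forall>d\<in>D. g d = f d"
    proof
      fix d assume d: "d \<in> D"
      hence "d \<in> span1 D z" using span1_D[OF D(1), of z] by blast
      thus "g d = f d" using g(2) g1(2) d by simp
    qed
    thus ?thesis using g(1,3) by blast
  qed
  show ?case
  proof (cases "1 \<in> D")
    case False
    obtain b where b: "b \<in> K" "\<forall>d\<in>D. v (b - f d) \<le> t * v (1 - d)" using CaseB[OF tnV D f fb False] by blast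
    show ?thesis using step[OF oneE _ False b] unfolding BB_def by blast
  next
    case one: True
    show ?thesis
    proof (cases "\<exists>j\<in>J. x j \<notin> D")
      case True
      then obtain j where j: "j \<in> J" "x j \<notin> D" by blast
      obtain b where b: "b \<in> K" "\<forall>d\<in>D. v (b - f d) \<le> t * v (x j - d)" using CaseA[OF tnV D f fb one j] by blast
      show ?thesis using step[OF E_x(1)[OF j(1)] _ j(2) b] j(1) unfolding BB_def by blast
    next
      case False
      have "E \<subseteq> D"
      proof
        fix e assume eE: "e \<in> E"
        have "lam0 e * 1 \<in> D" using ksscale[OF D(1) lam0_K[OF eE] one] .
        moreover have "(\<Sum>j\<in>J. lam j e * x j) \<in> D"
        proof (rule kssum[OF D(1) finJ])
          fix j assume j: "j \<in> J"
          have "x j \<in> D" using False j by blast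
          thus "lam j e * x j \<in> D" using ksscale[OF D(1) lam_K[OF eE j]] by blast
        qed
        ultimately have "lam0 e * 1 + (\<Sum>j\<in>J. lam j e * x j) \<in> D" using ksadd[OF D(1)] by blast
        thus "e \<in> D" using lam_rep[OF eE] by simp
      qed
      hence "D = E" using D(2) by blast
      thus ?thesis using f fb by blast
    qed
  qed
qed

lemma dir2: assumes tnV: "t \<notin> value_group K v" shows "has_SE K v (\<lambda>z. t * v z) E"
  unfolding has_SE_def
proof (intro allI impI)
  fix D f assume h: "ksubspace K D \<and> D \<subseteq> E \<and> klinear_fun K D f \<and> has_opnorm v (\<lambda>z. t * v z) D f 1"
  have fb: "bnd D f" using h unfolding has_opnorm_def bnd_def by simp
  obtain g where g: "klinear_fun K E g" "\<forall>d\<in>D. g d = f d" "bnd E g"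
    using ExtAll[OF tnV _ _ _ fb] h by blast
  have "has_opnorm v (\<lambda>z. t * v z) E g 1"
    unfolding has_opnorm_def
  proof (intro conjI allI impI)
    show "\<forall>d\<in>E. v (g d) \<le> 1 * (t * v d)" using g(3) unfolding bnd_def by simp
    fix c' assume c': "\<forall>d\<in>E. v (g d) \<le> c' * (t * v d)"
    have "\<forall>d\<in>D. v (f d) \<le> c' * (t * v d)"
    proof
      fix d assume d: "d \<in> D"
      hence "d \<in> E" using h by blast
      hence "v (g d) \<le> c' * (t * v d)" using c' by blast
      thus "v (f d) \<le> c' * (t * v d)" using g(2) d by simp
    qed
    thus "1 \<le> c'" using h unfolding has_opnorm_def by blast
  qed
  thus "\<exists>g. klinear_fun K E g \<and> (\<forall>d\<in>D. g d = f d) \<and> has_opnorm v (\<lambda>z. t * v z) E g 1"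
    using g(1,2) by blast
qed

lemma dir1: assumes SE: "has_SE K v (\<lambda>z. t * v z) E" shows "t \<notin> value_group K v"
proof
  assume "t \<in> value_group K v"
  then obtain a where a: "a \<in> K" "a \<noteq> 0" "v a = t" unfolding value_group_def by blast
  define f where "f k = a * k" for k
  have KK: "ksubspace K K" unfolding ksubspace_def using K0 Kadd Kmult by blast
  have KE: "K \<subseteq> E" using E_K(1) by blast
  have fl: "klinear_fun K K f" unfolding klinear_fun_def f_def using Kmult[OF a(1)]
    by (simp add: algebra_simps)
  have fn: "has_opnorm v (\<lambda>z. t * v z) K f 1"
    unfolding has_opnorm_def
  proof (intro conjI allI impI)
    show "\<forall>d\<in>K. v (f d) \<le> 1 * (t * v d)" unfolding f_def using a(3) by (simp add: v_mult)
    fix c' assume "\<forall>d\<in>K. v (f d) \<le> c' * (t * v d)"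
    hence "v (f 1) \<le> c' * (t * v 1)" using K1 by blast
    hence "t \<le> c' * t" unfolding f_def using a(3) by simp
    thus "1 \<le> c'" using tpos by simp
  qed
  obtain g where g: "klinear_fun K E g" "\<forall>d\<in>K. g d = f d" "has_opnorm v (\<lambda>z. t * v z) E g 1"
    using SE KK KE fl fn unfolding has_SE_def by blast
  obtain j where j: "j \<in> J" using J_ne by blast
  have xE: "x j \<in> E" using E_x(1)[OF j] .
  have xnK: "x j \<notin> K" using J_xK[OF j] .
  define b where "b = g (x j)"
  have bK: "b \<in> K" unfolding b_def using kl_K[OF g(1) xE] .
  have gb: "v (b - a * k) \<le> t * v (x j - k)" if k: "k \<in> K" for k
  proof -
    have mk: "- k \<in> E" using KE Kuminus[OF k] by blast
    have "g (x j + - k) = g (x j) + g (- k)" using kl_add[OF g(1) xE mk] .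
    also have "g (- k) = - (a * k)" using g(2) Kuminus[OF k] unfolding f_def by simp
    finally have "g (x j - k) = b - a * k" unfolding b_def by simp
    moreover have "x j - k \<in> E" using E_diff(1)[OF xE KE[THEN subsetD, OF k]] .
    ultimately show ?thesis using g(3) unfolding has_opnorm_def by force
  qed
  define b' where "b' = b / a"
  have b'K: "b' \<in> K" unfolding b'_def using Kdivide[OF bK a(1)] .
  have gb': "v (b' - k) \<le> v (x j - k)" if k: "k \<in> K" for k
  proof -
    have "b - a * k = a * (b' - k)" unfolding b'_def using a(2) by (simp add: field_simps)
    hence "v a * v (b' - k) \<le> v a * v (x j - k)" using gb[OF k] a(3) by (simp add: v_mult)
    thus ?thesis using v_pos[OF a(2)] by simp
  qed
  define w where "w = x j - b'"
  have wnz: "w \<noteq> 0" unfolding w_def using xnK b'K by auto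
  obtain c where c: "c \<in> K" "v (w - c) < v w" using close_approx[OF wnz] by blast
  have "v (w - (w - c)) = v w" using c(2) by (rule v_strict_diff)
  hence vc: "v c = v w" by simp
  have "v (b' - (b' + c)) \<le> v (x j - (b' + c))" using gb'[OF Kadd[OF b'K c(1)]] .
  hence "v c \<le> v (w - c)" unfolding w_def by (simp add: algebra_simps)
  thus False using vc c(2) by simp
qed

end

theorem mainTheorem11:
  fixes v :: "'a::field \<Rightarrow> real" and K :: "'a set" and x :: "nat \<Rightarrow> 'a"
    and n :: nat and t :: real
  assumes "nonarch_abs v" and "subfield K" and "complete_in K v"
    and "nontrivially_valued K v" and "\<not> sph_complete_in K v"
    and "sph_complete_in UNIV v" and "immediate_ext K v"
    and "n \<ge> 1" and "\<forall>i\<in>{1..n}. x i \<notin> K" and "t > 0"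
    and "pi_orthogonal K v n x"
  shows "has_SE K v (\<lambda>z. t * v z) (kspan K n x) \<longleftrightarrow> t \<notin> value_group K v"
proof -
  interpret setting v K x n t
    by (rule setting.intro[OF valsetup.intro[OF assms(1,2)] setting_axioms.intro[OF assms(3,7,8,9,10,11)]])
  show ?thesis using dir1 dir2 by blast
qed

end
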